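(* Fix $\varepsilon_0\ge0$ and $n\ge1$. (i) For every convex $f:[0,\infty)\to\mathbb R$ with $f(1)=0$, $$\sup_{d\ge2}\ \sup_{\rho\in\mathfrak M_d:\,W_\rho\ \varepsilon_0\text{-LDP}}\ \sup_{i\ne j}D_f\bigl(Q^{ij}_{1,n}\,\|\,Q^{ij}_{0,n}\bigr)=D_f\bigl(Q^{\mathrm{BRR}}_{1,n}\,\|\,Q^{\mathrm{BRR}}_{0,n}\bigr).$$ (ii) For every $\alpha\ge1$, $$\sup_{d\ge2}\ \sup_{\rho\in\mathfrak M_d:\,W_\rho\ \varepsilon_0\text{-LDP}}\ \sup_{i\ne j}H_\alpha\bigl(Q^{ij}_{1,n},Q^{ij}_{0,n}\bigr)=H_\alpha\bigl(Q^{\mathrm{BRR}}_{1,n},Q^{\mathrm{BRR}}_{0,n}\bigr)$$ and $$\sup_{d\ge2}\ \sup_{\rho\in\mathfrak M_d:\,W_\rho\ \varepsilon_0\text{-LDP}}\ \sup_{i\ne j}H_\alpha\bigl(Q^{ij}_{0,n},Q^{ij}_{1,n}\bigr)=H_\alpha\bigl(Q^{\mathrm{BRR}}_{0,n},Q^{\mathrm{BRR}}_{1,n}\bigr).$$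
   Context: For each integer $d\ge 2$: let $H\in\mathbb R^{d\times(d-1)}$ have orthonormal columns spanning $\{u\in\mathbb R^d:\mathbf 1^\top u=0\}$, set $\gamma_i:=H^\top e_i$ ($i\in[d]$), $\mathcal X_d:=\{x\in\mathbb R^{d-1}:1+\gamma_i^\top x\ge0\ \forall i\}$. An anchored law is a Borel probability measure $\rho$ on $\mathcal X_d$ with $\int x\,\rho(dx)=0$; $\mathfrak M_d$ is the set of anchored laws, and $W_\rho(B\mid i):=\int_B(1+\gamma_i^\top x)\rho(dx)$ is the associated channel from $[d]$ to $\mathcal X_d$. A channel $W$ is $\varepsilon_0$-LDP if $W(B\mid j)\le e^{\varepsilon_0}W(B\mid i)$ for all measurable $B$ and all input pairs $i,j$. For a channel $W$, inputs $i\ne j$ and $n\ge1$, the shuffled neighboring pair is $Q^{ij}_{0,n}:=W(\cdot\mid i)^{\otimes n}$ and $Q^{ij}_{1,n}:=\frac1n\sum_{m=1}^n W(\cdot\mid i)^{\otimes(m-1)}\otimes W(\cdot\mid j)\otimes W(\cdot\mid i)^{\otimes(n-m)}$ (here with $W=W_\rho$). Binary randomized response (BRR) with parameter $\varepsilon_0$ is the channel on $\{1,2\}$ with $W(1\mid1)=W(2\mid2)=e^{\varepsilon_0}/(1+e^{\varepsilon_0})$, $W(2\mid1)=W(1\mid2)=1/(1+e^{\varepsilon_0})$, and $Q^{\mathrm{BRR}}_{0,n},Q^{\mathrm{BRR}}_{1,n}$ denote its pair with $(i,j)=(1,2)$. For $P\ll Q$ and convex $f$ with $f(1)=0$, $D_f(P\|Q):=\int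 f(dP/dQ)\,dQ$; for $\alpha\ge1$, $H_\alpha(P,Q):=\int(dP/dQ-\alpha)_+\,dQ$. *)

theory Defs
  imports "HOL-Probability.Probability"
begin

text \<open>Vectors in R^m are functions nat => real, restricted to the index set {..<m}
  (measurable space PiM {..<m} (lambda _. borel)). The matrix H (d x (d-1)) is a function
  H i k, i < d (row), k < d-1 (column). Inputs [d] are {..<d} (0-based).\<close>

definition valid_H :: "nat \<Rightarrow> (nat \<Rightarrow> nat \<Rightarrow> real) \<Rightarrow> bool" where
  "valid_H d H \<longleftrightarrow>
     (\<forall>k<d-1. \<forall>l<d-1. (\<Sum>i<d. H i k * H i l) = (if k = l then 1 else 0)) \<and>
     {u :: nat \<Rightarrow> real. (\<forall>i\<ge>d. u i = 0) \<and> (\<Sum>i<d. u i) = 0}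
       = {(\<lambda>i. if i < d then (\<Sum>k<d-1. c k * H i k) else 0) | c. True}"

text \<open>gamma_i^T x = (H^T e_i)^T x\<close>
definition gam_dot :: "nat \<Rightarrow> (nat \<Rightarrow> nat \<Rightarrow> real) \<Rightarrow> nat \<Rightarrow> (nat \<Rightarrow> real) \<Rightarrow> real" where
  "gam_dot d H i x = (\<Sum>k<d-1. H i k * x k)"

definition Xset :: "nat \<Rightarrow> (nat \<Rightarrow> nat \<Rightarrow> real) \<Rightarrow> (nat \<Rightarrow> real) set" where
  "Xset d H = {x \<in> space (PiM {..<d-1} (\<lambda>_. borel :: real measure)).
                 \<forall>i<d. 1 + gam_dot d H i x \<ge> 0}"

definition anchored :: "nat \<Rightarrow> (nat \<Rightarrow> nat \<Rightarrow> real) \<Rightarrow> (nat \<Rightarrow> real) measure \<Rightarrow> bool" where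
  "anchored d H \<rho> \<longleftrightarrow>
     prob_space \<rho> \<and> sets \<rho> = sets (PiM {..<d-1} (\<lambda>_. borel :: real measure)) \<and>
     (AE x in \<rho>. x \<in> Xset d H) \<and>
     (\<forall>k<d-1. integrable \<rho> (\<lambda>x. x k) \<and> (\<integral>x. x k \<partial>\<rho>) = 0)"

definition Wrho :: "nat \<Rightarrow> (nat \<Rightarrow> nat \<Rightarrow> real) \<Rightarrow> (nat \<Rightarrow> real) measure \<Rightarrow> nat \<Rightarrow> (nat \<Rightarrow> real) measure" where
  "Wrho d H \<rho> i = density \<rho> (\<lambda>x. ennreal (1 + gam_dot d H i x))"

definition is_LDP :: "real \<Rightarrow> 'i set \<Rightarrow> ('i \<Rightarrow> 'y measure) \<Rightarrow> bool" where
  "is_LDP \<epsilon>0 I W \<longleftrightarrow>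
     (\<forall>i\<in>I. \<forall>j\<in>I. \<forall>B\<in>sets (W i). emeasure (W j) B \<le> ennreal (exp \<epsilon>0) * emeasure (W i) B)"

definition avg_measure :: "nat \<Rightarrow> (nat \<Rightarrow> 'a measure) \<Rightarrow> 'a measure" where
  "avg_measure n M = measure_of (space (M 0)) (sets (M 0))
      (\<lambda>A. (\<Sum>m<n. emeasure (M m) A) / of_nat n)"

definition Qzero :: "('i \<Rightarrow> 'y measure) \<Rightarrow> 'i \<Rightarrow> nat \<Rightarrow> (nat \<Rightarrow> 'y) measure" where
  "Qzero W i n = PiM {..<n} (\<lambda>_. W i)"

definition Qone :: "('i \<Rightarrow> 'y measure) \<Rightarrow> 'i \<Rightarrow> 'i \<Rightarrow> nat \<Rightarrow> (nat \<Rightarrow> 'y) measure" where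
  "Qone W i j n = avg_measure n (\<lambda>m. PiM {..<n} (\<lambda>k. if k = m then W j else W i))"

definition fdiv :: "(real \<Rightarrow> real) \<Rightarrow> 'a measure \<Rightarrow> 'a measure \<Rightarrow> real" where
  "fdiv f P Q = (\<integral>x. f (enn2real (RN_deriv Q P x)) \<partial>Q)"

definition hockey :: "real \<Rightarrow> 'a measure \<Rightarrow> 'a measure \<Rightarrow> real" where
  "hockey \<alpha> P Q = (\<integral>x. max 0 (enn2real (RN_deriv Q P x) - \<alpha>) \<partial>Q)"

text \<open>Binary randomized response: inputs 0 ("1") and 1 ("2"), outputs True ("1") / False ("2").\<close>
definition BRR :: "real \<Rightarrow> nat \<Rightarrow> bool measure" where
  "BRR \<epsilon>0 i = measure_pmf (bernoulli_pmf
      (if i = 0 then exp \<epsilon>0 / (1 + exp \<epsilon>0) else 1 / (1 + exp \<epsilon>0)))"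

definition admissible :: "(nat \<Rightarrow> nat \<Rightarrow> nat \<Rightarrow> real) \<Rightarrow> real \<Rightarrow>
    (nat \<times> (nat \<Rightarrow> real) measure \<times> nat \<times> nat) set" where
  "admissible HH \<epsilon>0 = {(d, \<rho>, i, j). 2 \<le> d \<and> anchored d (HH d) \<rho> \<and>
       is_LDP \<epsilon>0 {..<d} (Wrho d (HH d) \<rho>) \<and> i < d \<and> j < d \<and> i \<noteq> j}"

end

theory Submission
  imports Defs
begin
definition pB :: "real \<Rightarrow> real" where "pB \<theta> = \<theta> / (1 + \<theta>)"
definition lam :: "real \<Rightarrow> real \<Rightarrow> real" where "lam \<theta> x = (x - 1/\<theta>) / (\<theta> - 1/\<theta>)"

primrec Bn :: "real \<Rightarrow> (real \<Rightarrow> real) \<Rightarrow> nat \<Rightarrow> real \<Rightarrow> real" where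
  "Bn \<theta> G 0 c = G c"
| "Bn \<theta> G (Suc n) c = pB \<theta> * Bn \<theta> G n (c + 1/\<theta>) + (1 - pB \<theta>) * Bn \<theta> G n (c + \<theta>)"

lemma chord_pt:
  fixes G :: "real \<Rightarrow> real"
  assumes cv: "convex_on {0..} G" and th: "\<theta> \<ge> 1" and a: "a \<ge> 0"
    and x: "1/\<theta> \<le> x" "x \<le> \<theta>"
  shows "G (a + x) \<le> lam \<theta> x * G (a + \<theta>) + (1 - lam \<theta> x) * G (a + 1/\<theta>)"
proof (cases "\<theta> = 1")
  case True
  then have "x = 1" using x by auto
  then show ?thesis using True by (simp add: lam_def)
next
  case False
  then have th1: "\<theta> > 1" using th by auto
  have inv: "1/\<theta> < \<theta>" using th1
    by (smt (verit) divide_less_eq_1_pos less_divide_eq_1_pos)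
  define t where "t = lam \<theta> x"
  have t0: "0 \<le> t" and t1: "t \<le> 1" using x inv unfolding t_def lam_def by (auto simp: divide_simps)
  have D: "\<theta> - 1/\<theta> \<noteq> 0" using inv by simp
  have tD: "t * (\<theta> - 1/\<theta>) = x - 1/\<theta>" using D unfolding t_def lam_def by simp
  have eq: "(1 - t) *\<^sub>R (a + 1/\<theta>) + t *\<^sub>R (a + \<theta>) = a + x"
    using tD by (simp add: algebra_simps diff_divide_distrib)
  have "G ((1 - t) *\<^sub>R (a + 1/\<theta>) + t *\<^sub>R (a + \<theta>)) \<le> (1 - t) * G (a + 1/\<theta>) + t * G (a + \<theta>)"
    by (rule convex_onD[OF cv t0 t1]) (use a th1 in auto)
  from this[unfolded eq] show ?thesis unfolding t_def by (simp add: algebra_simps)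
qed

lemma chord_eq:
  fixes G :: "real \<Rightarrow> real"
  assumes th: "\<theta> \<ge> 1" and x: "x = 1/\<theta> \<or> x = \<theta>"
  shows "G (a + x) = lam \<theta> x * G (a + \<theta>) + (1 - lam \<theta> x) * G (a + 1/\<theta>)"
proof (cases "\<theta> = 1")
  case True
  then show ?thesis using x by (simp add: lam_def)
next
  case False
  then have th1: "\<theta> > 1" using th by auto
  have inv: "1/\<theta> < \<theta>" using th1
    by (smt (verit) divide_less_eq_1_pos less_divide_eq_1_pos)
  show ?thesis using x inv by (auto simp: lam_def)
qed

lemma lam_mean:
  assumes th1: "\<theta> > 1"
  shows "(1 - 1/\<theta>) / (\<theta> - 1/\<theta>) = 1 - pB \<theta>"
proof -
  have "\<theta> * \<theta> - 1 \<noteq> 0" using th1 by (smt (verit) mult_less_cancel_left1)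
  then show ?thesis using th1
    by (simp add: pB_def field_simps)
qed

lemma convex_cont_pos:
  fixes G :: "real \<Rightarrow> real"
  assumes cv: "convex_on {0..} G"
  shows "continuous_on {0<..} G"
  by (rule convex_on_continuous[OF open_greaterThan convex_on_subset[OF cv]]) auto

lemma meas_convex:
  fixes G :: "real \<Rightarrow> real"
  assumes cv: "convex_on {0..} G" and F: "F \<in> borel_measurable M"
    and pos: "\<And>y. y \<in> space M \<Longrightarrow> 0 \<le> F y"
  shows "(\<lambda>y. G (F y)) \<in> borel_measurable M"
proof -
  have h1: "(\<lambda>t. indicator {0<..} t *\<^sub>R G t) \<in> borel_measurable borel"
    by (rule borel_measurable_continuous_on_indicator) (auto intro: convex_cont_pos[OF cv])
  have h2: "(\<lambda>t::real. indicator {0} t * G 0) \<in> borel_measurable borel"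
    by measurable
  have "(\<lambda>y. indicator {0<..} (F y) *\<^sub>R G (F y) + indicator {0} (F y) * G 0) \<in> borel_measurable M"
    using measurable_comp[OF F h1] measurable_comp[OF F h2] by (auto simp: comp_def)
  moreover have "\<And>y. y \<in> space M \<Longrightarrow> indicator {0<..} (F y) *\<^sub>R G (F y) + indicator {0} (F y) * G 0 = G (F y)"
    using pos by (force simp: indicator_def)
  ultimately show ?thesis by (rule measurable_cong[THEN iffD1, rotated])
qed

lemma integ_convex:
  fixes G :: "real \<Rightarrow> real"
  assumes fm: "finite_measure M" and cv: "convex_on {0..} G" and F: "F \<in> borel_measurable M"
    and lo: "lo > 0" and bnd: "\<And>y. y \<in> space M \<Longrightarrow> lo \<le> F y \<and> F y \<le> hi"
  shows "integrable M (\<lambda>y. G (F y))"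
proof -
  have "continuous_on {lo..hi} G"
    by (rule continuous_on_subset[OF convex_cont_pos[OF cv]]) (use lo in auto)
  then have "compact (G ` {lo..hi})" by (rule compact_continuous_image) auto
  then obtain B where B: "\<And>z. z \<in> G ` {lo..hi} \<Longrightarrow> norm z \<le> B"
    using compact_imp_bounded bounded_iff by metis
  show ?thesis
  proof (rule finite_measure.integrable_const_bound[OF fm, where B=B])
    show "AE x in M. norm (G (F x)) \<le> B" using B bnd by (intro AE_I2) auto
    show "(\<lambda>y. G (F y)) \<in> borel_measurable M"
      by (rule meas_convex[OF cv F]) (use bnd lo in force)
  qed
qed

lemma lam_range:
  assumes th: "\<theta> \<ge> 1" and x: "1/\<theta> \<le> x" "x \<le> \<theta>"
  shows "0 \<le> lam \<theta> x \<and> lam \<theta> x \<le> 1"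
proof (cases "\<theta> = 1")
  case True then show ?thesis by (simp add: lam_def)
next
  case False
  then have th1: "\<theta> > 1" using th by auto
  have inv: "1/\<theta> < \<theta>" using th1
    by (smt (verit) divide_less_eq_1_pos less_divide_eq_1_pos)
  show ?thesis using x inv by (auto simp: lam_def divide_simps)
qed

lemma sum_meas:
  fixes r :: "'a \<Rightarrow> real"
  assumes rm: "r \<in> borel_measurable P" and K: "K \<subseteq> J"
  shows "(\<lambda>z. a + (\<Sum>m\<in>K. r (z m))) \<in> borel_measurable (PiM J (\<lambda>_. P))"
proof -
  have "(\<lambda>z. r (z m)) \<in> borel_measurable (PiM J (\<lambda>_. P))" if "m \<in> K" for m
  proof -
    have "(\<lambda>z. z m) \<in> measurable (PiM J (\<lambda>_. P)) P"
      using measurable_component_singleton[of m J "\<lambda>_. P"] that K by auto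
    from measurable_compose[OF this rm] show ?thesis .
  qed
  then have "(\<lambda>z. \<Sum>m\<in>K. r (z m)) \<in> borel_measurable (PiM J (\<lambda>_. P))"
    by (rule borel_measurable_sum[where f="\<lambda>m z. r (z m)"])
  then show ?thesis by simp
qed

lemma integ_sum:
  fixes G :: "real \<Rightarrow> real" and r :: "'a \<Rightarrow> real"
  assumes ps: "prob_space P" and rm: "r \<in> borel_measurable P"
    and rb: "\<And>y. y \<in> space P \<Longrightarrow> 1/\<theta> \<le> r y \<and> r y \<le> \<theta>" and th: "\<theta> \<ge> 1"
    and cv: "convex_on {0..} G" and K: "K \<subseteq> J" "finite J" and a: "a \<ge> 0"
  shows "integrable (PiM J (\<lambda>_. P)) (\<lambda>z. G (a + (\<Sum>m\<in>K. r (z m))))"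
proof -
  have pJ: "prob_space (PiM J (\<lambda>_. P))" by (rule prob_space_PiM) (use ps in auto)
  then have fm: "finite_measure (PiM J (\<lambda>_. P))" by (simp add: prob_space_def)
  have finK: "finite K" using K finite_subset by auto
  show ?thesis
  proof (cases "K = {}")
    case True
    then show ?thesis using fm by (simp add: finite_measure.integrable_const)
  next
    case False
    then have cK: "card K > 0" using finK by auto
    have thp: "\<theta> > 0" using th by auto
    show ?thesis
    proof (rule integ_convex[OF fm cv sum_meas[OF rm K(1)], where lo="a + card K * (1/\<theta>)" and hi="a + card K * \<theta>"])
      show "0 < a + real (card K) * (1 / \<theta>)" using a cK thp by (simp add: add_nonneg_pos)
      fix z assume z: "z \<in> space (PiM J (\<lambda>_. P))"
      then have zs: "\<And>m. m \<in> K \<Longrightarrow> z m \<in> space P" using K by (auto simp: space_PiM PiE_def Pi_def)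
      have "real (card K) * (1/\<theta>) \<le> (\<Sum>m\<in>K. r (z m))"
        by (rule sum_bounded_below) (use zs rb in auto)
      moreover have "(\<Sum>m\<in>K. r (z m)) \<le> real (card K) * \<theta>"
        by (rule sum_bounded_above) (use zs rb in auto)
      ultimately show "a + real (card K) * (1 / \<theta>) \<le> a + (\<Sum>m\<in>K. r (z m)) \<and>
          a + (\<Sum>m\<in>K. r (z m)) \<le> a + real (card K) * \<theta>" by auto
    qed
  qed
qed

lemma r_integrable:
  fixes r :: "'a \<Rightarrow> real"
  assumes ps: "prob_space P" and rm: "r \<in> borel_measurable P"
    and rb: "\<And>y. y \<in> space P \<Longrightarrow> 1/\<theta> \<le> r y \<and> r y \<le> \<theta>" and th: "\<theta> \<ge> 1"
  shows "integrable P r"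
proof (rule finite_measure.integrable_const_bound[where B=\<theta>])
  show "finite_measure P" using ps by (simp add: prob_space_def)
  have "0 < 1/\<theta>" using th by simp
  then show "AE x in P. norm (r x) \<le> \<theta>"
  proof (intro AE_I2)
    fix x assume "0 < 1/\<theta>" "x \<in> space P"
    then have "1/\<theta> \<le> r x" "r x \<le> \<theta>" using rb[of x] by auto
    moreover have "0 < r x" using \<open>0 < 1/\<theta>\<close> \<open>1/\<theta> \<le> r x\<close> by linarith
    ultimately show "norm (r x) \<le> \<theta>" by simp
  qed
qed (rule rm)

lemma inner_lin:
  fixes r :: "'a \<Rightarrow> real"
  assumes ps: "prob_space P" and rm: "r \<in> borel_measurable P"
    and rb: "\<And>y. y \<in> space P \<Longrightarrow> 1/\<theta> \<le> r y \<and> r y \<le> \<theta>" and th: "\<theta> \<ge> 1"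
    and ri: "(\<integral>y. r y \<partial>P) = 1" and AB: "\<theta> = 1 \<Longrightarrow> A = B"
  shows "(\<integral>y. lam \<theta> (r y) * A + (1 - lam \<theta> (r y)) * B \<partial>P) = (1 - pB \<theta>) * A + pB \<theta> * B"
proof (cases "\<theta> = 1")
  case True
  then have "(\<integral>y. lam \<theta> (r y) * A + (1 - lam \<theta> (r y)) * B \<partial>P) = B"
    using ps by (simp add: lam_def prob_space.prob_space)
  then show ?thesis using True AB by (simp add: pB_def)
next
  case False
  then have th1: "\<theta> > 1" using th by auto
  define D where "D = \<theta> - 1/\<theta>"
  have ir: "integrable P r" by (rule r_integrable[OF ps rm rb th])
  have "\<And>y. lam \<theta> (r y) * A + (1 - lam \<theta> (r y)) * B = (B - (A - B) / D / \<theta>) + ((A - B) / D) * r y"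
    unfolding lam_def D_def[symmetric] by (simp add: algebra_simps diff_divide_distrib add_divide_distrib)
  then have "(\<integral>y. lam \<theta> (r y) * A + (1 - lam \<theta> (r y)) * B \<partial>P)
      = (\<integral>y. (B - (A - B) / D / \<theta>) + ((A - B) / D) * r y \<partial>P)" by simp
  also have "\<dots> = (B - (A - B) / D / \<theta>) + ((A - B) / D)"
  proof -
    define c0 where "c0 = B - (A - B) / D / \<theta>"
    define k where "k = (A - B) / D"
    have "(\<integral>y. c0 + k * r y \<partial>P) = (\<integral>y. c0 \<partial>P) + (\<integral>y. k * r y \<partial>P)"
    proof -
      have "integrable P (\<lambda>y. c0)" using ps
        by (simp add: prob_space_def finite_measure.integrable_const)
      then show ?thesis by (subst Bochner_Integration.integral_add) (use ir in auto)
    qed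
    also have "\<dots> = c0 + k" using ri ps by (simp add: prob_space.prob_space)
    finally show ?thesis unfolding c0_def k_def .
  qed
  also have "\<dots> = B + (A - B) * ((1 - 1/\<theta>) / D)" by (simp add: algebra_simps diff_divide_distrib)
  also have "\<dots> = (1 - pB \<theta>) * A + pB \<theta> * B" unfolding D_def lam_mean[OF th1] by (simp add: algebra_simps)
  finally show ?thesis .
qed

lemma comp_meas:
  fixes r :: "'a \<Rightarrow> real"
  assumes rm: "r \<in> borel_measurable P" and m: "m \<in> J"
  shows "(\<lambda>z. r (z m)) \<in> borel_measurable (PiM J (\<lambda>_. P))"
proof -
  have "(\<lambda>z. z m) \<in> measurable (PiM J (\<lambda>_. P)) P"
    using measurable_component_singleton[of m J "\<lambda>_. P"] m by auto
  from measurable_compose[OF this rm] show ?thesis .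
qed

lemma space_PiM_mem: "x \<in> space (PiM J (\<lambda>_. P)) \<Longrightarrow> m \<in> J \<Longrightarrow> x m \<in> space P"
  by (auto simp: space_PiM PiE_def Pi_def)

lemma sum_pos:
  fixes r :: "'a \<Rightarrow> real"
  assumes rb: "\<And>y. y \<in> space P \<Longrightarrow> 1/\<theta> \<le> r y \<and> r y \<le> \<theta>" and th: "\<theta> \<ge> 1"
    and x: "x \<in> space (PiM J (\<lambda>_. P))" and K: "K \<subseteq> J"
  shows "0 \<le> (\<Sum>m\<in>K. r (x m))"
proof (rule sum_nonneg)
  fix m assume "m \<in> K"
  then have "1/\<theta> \<le> r (x m)" using rb space_PiM_mem[OF x] K by auto
  moreover have "0 < 1/\<theta>" using th by simp
  ultimately show "0 \<le> r (x m)" by linarith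
qed

lemma LN:
  fixes G :: "real \<Rightarrow> real" and r :: "'a \<Rightarrow> real"
  assumes ps: "prob_space P" and rm: "r \<in> borel_measurable P"
    and rb: "\<And>y. y \<in> space P \<Longrightarrow> 1/\<theta> \<le> r y \<and> r y \<le> \<theta>" and th: "\<theta> \<ge> 1"
    and ri: "(\<integral>y. r y \<partial>P) = 1" and cv: "convex_on {0..} G"
  shows "c \<ge> 0 \<Longrightarrow> (\<integral>z. G (c + (\<Sum>m<n. r (z m))) \<partial>PiM {..<n} (\<lambda>_. P)) \<le> Bn \<theta> G n c \<and>
     ((AE y in P. r y = 1/\<theta> \<or> r y = \<theta>) \<longrightarrow>
        (\<integral>z. G (c + (\<Sum>m<n. r (z m))) \<partial>PiM {..<n} (\<lambda>_. P)) = Bn \<theta> G n c)"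
proof (induction n arbitrary: c)
  case 0
  have "prob_space (PiM {..<0::nat} (\<lambda>_. P))" by (rule prob_space_PiM) (use ps in auto)
  then show ?case by (simp add: prob_space.prob_space)
next
  case (Suc n)
  have c0: "c \<ge> 0" by fact
  have thp: "\<theta> > 0" using th by simp
  have PSF: "product_sigma_finite (\<lambda>_::nat. P)"
    unfolding product_sigma_finite_def using ps by (simp add: prob_space_imp_sigma_finite)
  define S where "S z = (\<Sum>m<n. r (z m))" for z :: "nat \<Rightarrow> 'a"
  define L where "L z = G (c + S z + r (z n))" for z
  define R where "R z = lam \<theta> (r (z n)) * G (c + S z + \<theta>) + (1 - lam \<theta> (r (z n))) * G (c + S z + 1/\<theta>)" for z
  define GA where "GA z = G ((c + \<theta>) + (\<Sum>m<n. r (z m)))" for z :: "nat \<Rightarrow> 'a"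
  define GB where "GB z = G ((c + 1/\<theta>) + (\<Sum>m<n. r (z m)))" for z :: "nat \<Rightarrow> 'a"
  let ?PS = "PiM {..<Suc n} (\<lambda>_. P)" and ?PI = "PiM {..<n} (\<lambda>_. P)"
  have Lform: "(\<lambda>z. G (c + (\<Sum>m<Suc n. r (z m)))) = L"
    by (auto simp: L_def S_def add_ac)
  have intL: "integrable ?PS L"
    using integ_sum[OF ps rm rb th cv, of "{..<Suc n}" "{..<Suc n}" c] c0 unfolding Lform by auto
  have intGA: "integrable ?PS GA"
    using integ_sum[OF ps rm rb th cv, of "{..<n}" "{..<Suc n}" "c + \<theta>"] c0 thp unfolding GA_def by auto
  have intGB: "integrable ?PS GB"
    using integ_sum[OF ps rm rb th cv, of "{..<n}" "{..<Suc n}" "c + 1/\<theta>"] c0 thp unfolding GB_def by auto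
  have intGA': "integrable ?PI GA"
    using integ_sum[OF ps rm rb th cv, of "{..<n}" "{..<n}" "c + \<theta>"] c0 thp unfolding GA_def by auto
  have intGB': "integrable ?PI GB"
    using integ_sum[OF ps rm rb th cv, of "{..<n}" "{..<n}" "c + 1/\<theta>"] c0 thp unfolding GB_def by auto
  have RGA: "R z = lam \<theta> (r (z n)) * GA z + (1 - lam \<theta> (r (z n))) * GB z" for z
    unfolding R_def GA_def GB_def S_def by (simp add: add_ac)
  have rn_meas: "(\<lambda>z. r (z n)) \<in> borel_measurable ?PS" by (rule comp_meas[OF rm]) auto
  have lam_meas: "(\<lambda>z. lam \<theta> (r (z n))) \<in> borel_measurable ?PS"
    unfolding lam_def using rn_meas by measurable
  have intR: "integrable ?PS R"
  proof (rule Bochner_Integration.integrable_bound[where f="\<lambda>z. \<bar>GA z\<bar> + \<bar>GB z\<bar>"])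
    show "integrable ?PS (\<lambda>z. \<bar>GA z\<bar> + \<bar>GB z\<bar>)" using intGA intGB by auto
    show "R \<in> borel_measurable ?PS" unfolding RGA[abs_def]
      using lam_meas borel_measurable_integrable[OF intGA] borel_measurable_integrable[OF intGB] by measurable
    show "AE x in ?PS. norm (R x) \<le> norm (\<bar>GA x\<bar> + \<bar>GB x\<bar>)"
    proof (intro AE_I2)
      fix z assume z: "z \<in> space ?PS"
      have "z n \<in> space P" using space_PiM_mem[OF z] by auto
      then have lr: "0 \<le> lam \<theta> (r (z n)) \<and> lam \<theta> (r (z n)) \<le> 1" using lam_range[OF th] rb by auto
      have "\<bar>R z\<bar> \<le> \<bar>lam \<theta> (r (z n)) * GA z\<bar> + \<bar>(1 - lam \<theta> (r (z n))) * GB z\<bar>"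
        unfolding RGA by (rule abs_triangle_ineq)
      also have "\<dots> = lam \<theta> (r (z n)) * \<bar>GA z\<bar> + (1 - lam \<theta> (r (z n))) * \<bar>GB z\<bar>"
        using lr by (simp add: abs_mult)
      also have "\<dots> \<le> \<bar>GA z\<bar> + \<bar>GB z\<bar>" using lr
        by (intro add_mono mult_left_le_one_le) auto
      finally show "norm (R z) \<le> norm (\<bar>GA z\<bar> + \<bar>GB z\<bar>)" by simp
    qed
  qed
  have PII: "\<And>F :: (nat \<Rightarrow> 'a) \<Rightarrow> real. integrable ?PS F \<Longrightarrow> (\<integral>z. F z \<partial>?PS) = (\<integral>x. (\<integral>y. F (x(n := y)) \<partial>P) \<partial>?PI)"
    unfolding lessThan_Suc by (rule product_sigma_finite.product_integral_insert[OF PSF]) auto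
  have Sx: "S (x(n := y)) = S x" for x y unfolding S_def by simp
  have eqR: "(\<integral>z. R z \<partial>?PS) = (1 - pB \<theta>) * (\<integral>x. GA x \<partial>?PI) + pB \<theta> * (\<integral>x. GB x \<partial>?PI)"
  proof -
    have "(\<integral>z. R z \<partial>?PS) = (\<integral>x. (\<integral>y. R (x(n := y)) \<partial>P) \<partial>?PI)" by (rule PII[OF intR])
    also have "\<dots> = (\<integral>x. (1 - pB \<theta>) * GA x + pB \<theta> * GB x \<partial>?PI)"
    proof (rule Bochner_Integration.integral_cong[OF refl])
      fix x assume x: "x \<in> space ?PI"
      have AB: "\<theta> = 1 \<Longrightarrow> G (c + S x + \<theta>) = G (c + S x + 1/\<theta>)" by simp
      have "(\<integral>y. R (x(n := y)) \<partial>P) = (\<integral>y. lam \<theta> (r y) * G (c + S x + \<theta>) + (1 - lam \<theta> (r y)) * G (c + S x + 1/\<theta>) \<partial>P)"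
        unfolding R_def Sx by simp
      also have "\<dots> = (1 - pB \<theta>) * G (c + S x + \<theta>) + pB \<theta> * G (c + S x + 1/\<theta>)"
        by (rule inner_lin[OF ps rm rb th ri AB])
      finally show "(\<integral>y. R (x(n := y)) \<partial>P) = (1 - pB \<theta>) * GA x + pB \<theta> * GB x"
        unfolding GA_def GB_def S_def by (simp add: add_ac)
    qed
    also have "\<dots> = (1 - pB \<theta>) * (\<integral>x. GA x \<partial>?PI) + pB \<theta> * (\<integral>x. GB x \<partial>?PI)"
      using intGA' intGB' by (subst Bochner_Integration.integral_add) auto
    finally show ?thesis .
  qed
  have IHA: "(\<integral>x. GA x \<partial>?PI) \<le> Bn \<theta> G n (c + \<theta>) \<and>
      ((AE y in P. r y = 1/\<theta> \<or> r y = \<theta>) \<longrightarrow> (\<integral>x. GA x \<partial>?PI) = Bn \<theta> G n (c + \<theta>))"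
    unfolding GA_def using Suc.IH[of "c + \<theta>"] c0 thp by auto
  have IHB: "(\<integral>x. GB x \<partial>?PI) \<le> Bn \<theta> G n (c + 1/\<theta>) \<and>
      ((AE y in P. r y = 1/\<theta> \<or> r y = \<theta>) \<longrightarrow> (\<integral>x. GB x \<partial>?PI) = Bn \<theta> G n (c + 1/\<theta>))"
    unfolding GB_def using Suc.IH[of "c + 1/\<theta>"] c0 thp by auto
  have pB01: "0 \<le> pB \<theta>" "pB \<theta> \<le> 1" using thp by (auto simp: pB_def)
  have BnS: "Bn \<theta> G (Suc n) c = (1 - pB \<theta>) * Bn \<theta> G n (c + \<theta>) + pB \<theta> * Bn \<theta> G n (c + 1/\<theta>)"
    by simp
  have LleR: "(\<integral>z. L z \<partial>?PS) \<le> (\<integral>z. R z \<partial>?PS)"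
  proof (rule Bochner_Integration.integral_mono[OF intL intR])
    fix z assume z: "z \<in> space ?PS"
    have "z n \<in> space P" using space_PiM_mem[OF z] by auto
    then have "1/\<theta> \<le> r (z n)" "r (z n) \<le> \<theta>" using rb by auto
    moreover have "0 \<le> c + S z" using c0 sum_pos[where P=P and r=r and \<theta>=\<theta> and x=z and J="{..<Suc n}" and K="{..<n}", OF rb th z] unfolding S_def by auto
    ultimately show "L z \<le> R z" unfolding L_def R_def by (intro chord_pt[OF cv th])
  qed
  have ineq: "(\<integral>z. L z \<partial>?PS) \<le> Bn \<theta> G (Suc n) c"
  proof -
    have "(1 - pB \<theta>) * (\<integral>x. GA x \<partial>?PI) \<le> (1 - pB \<theta>) * Bn \<theta> G n (c + \<theta>)"
      using IHA pB01 by (intro mult_left_mono) auto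
    moreover have "pB \<theta> * (\<integral>x. GB x \<partial>?PI) \<le> pB \<theta> * Bn \<theta> G n (c + 1/\<theta>)"
      using IHB pB01 by (intro mult_left_mono) auto
    ultimately show ?thesis using LleR eqR BnS by linarith
  qed
  have eq: "(\<integral>z. L z \<partial>?PS) = Bn \<theta> G (Suc n) c" if AE2: "AE y in P. r y = 1/\<theta> \<or> r y = \<theta>"
  proof -
    have "(\<integral>z. L z \<partial>?PS) = (\<integral>x. (\<integral>y. L (x(n := y)) \<partial>P) \<partial>?PI)" by (rule PII[OF intL])
    also have "\<dots> = (\<integral>x. (\<integral>y. R (x(n := y)) \<partial>P) \<partial>?PI)"
    proof (rule Bochner_Integration.integral_cong[OF refl])
      fix x assume x: "x \<in> space ?PI"
      have a0: "0 \<le> c + S x" using c0 sum_pos[where P=P and r=r and \<theta>=\<theta> and x=x and J="{..<n}" and K="{..<n}", OF rb th x] unfolding S_def by auto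
      show "(\<integral>y. L (x(n := y)) \<partial>P) = (\<integral>y. R (x(n := y)) \<partial>P)"
      proof (rule integral_cong_AE)
        show "(\<lambda>y. L (x(n := y))) \<in> borel_measurable P"
          unfolding L_def Sx fun_upd_same
        proof (rule meas_convex[OF cv])
          show "(\<lambda>y. c + S x + r y) \<in> borel_measurable P" using rm by measurable
          fix y assume "y \<in> space P"
          then have "1/\<theta> \<le> r y" using rb by auto
          moreover have "0 < 1/\<theta>" using thp by simp
          ultimately show "0 \<le> c + S x + r y" using a0 by linarith
        qed
        show "(\<lambda>y. R (x(n := y))) \<in> borel_measurable P"
          unfolding R_def Sx fun_upd_same lam_def using rm by measurable
        show "AE y in P. L (x(n := y)) = R (x(n := y))"
          using AE2
        proof eventually_elim
          fix y assume "r y = 1/\<theta> \<or> r y = \<theta>"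
          then show "L (x(n := y)) = R (x(n := y))"
            unfolding L_def R_def Sx fun_upd_same by (rule chord_eq[OF th])
        qed
      qed
    qed
    also have "\<dots> = (\<integral>z. R z \<partial>?PS)" by (rule PII[OF intR, symmetric])
    finally show ?thesis using eqR IHA IHB AE2 BnS by simp
  qed
  show ?case unfolding Lform using ineq eq by blast
qed

lemma PiM_comp_density:
  fixes r :: "'y \<Rightarrow> real" and I :: "nat set"
  assumes psP: "prob_space P" and psQ: "prob_space Q" and Qd: "Q = density P (\<lambda>y. ennreal (r y))"
    and rm: "r \<in> borel_measurable P" and m: "m \<in> I" and fin: "finite I"
  shows "PiM I (\<lambda>k. if k = m then Q else P) = density (PiM I (\<lambda>_. P)) (\<lambda>z. ennreal (r (z m)))"
proof -
  let ?Mk = "\<lambda>k. if k = m then Q else P"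
  have PSF: "product_sigma_finite ?Mk"
    unfolding product_sigma_finite_def using psP psQ by (simp add: prob_space_imp_sigma_finite)
  have PSF1: "product_sigma_finite (\<lambda>_::nat. P)"
    unfolding product_sigma_finite_def using psP by (simp add: prob_space_imp_sigma_finite)
  have sQ: "sets Q = sets P" using Qd by simp
  have sets_eq: "sets (PiM I ?Mk) = sets (PiM I (\<lambda>_. P))"
    by (rule sets_PiM_cong) (auto simp: sQ)
  have rmz: "(\<lambda>z. ennreal (r (z m))) \<in> borel_measurable (PiM I (\<lambda>_. P))"
    using comp_meas[OF rm m] by measurable
  have "density (PiM I (\<lambda>_. P)) (\<lambda>z. ennreal (r (z m))) = PiM I ?Mk"
  proof (rule product_sigma_finite.PiM_eqI[OF PSF fin])
    show "sets (density (PiM I (\<lambda>_. P)) (\<lambda>z. ennreal (r (z m)))) = sets (PiM I ?Mk)"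
      using sets_eq by simp
  next
    fix A assume A: "\<And>i. i \<in> I \<Longrightarrow> A i \<in> sets (?Mk i)"
    have AP: "A i \<in> sets P" if i: "i \<in> I" for i
      using A[OF i] sQ by (cases "i = m") auto
    have box: "Pi\<^sub>E I A \<in> sets (PiM I (\<lambda>_. P))"
      using AP by (intro sets_PiM_I_finite fin) auto
    define g where "g k y = (if k = m then ennreal (r y) else 1) * indicator (A k) y" for k y
    have gm: "g k \<in> borel_measurable P" if "k \<in> I" for k
      unfolding g_def using AP[OF that] rm by measurable
    have "emeasure (density (PiM I (\<lambda>_. P)) (\<lambda>z. ennreal (r (z m)))) (Pi\<^sub>E I A)
        = (\<integral>\<^sup>+ z. ennreal (r (z m)) * indicator (Pi\<^sub>E I A) z \<partial>PiM I (\<lambda>_. P))"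
      by (rule emeasure_density[OF rmz box])
    also have "\<dots> = (\<integral>\<^sup>+ z. (\<Prod>k\<in>I. g k (z k)) \<partial>PiM I (\<lambda>_. P))"
    proof (rule nn_integral_cong)
      fix z assume z: "z \<in> space (PiM I (\<lambda>_. P))"
      have "(\<Prod>k\<in>I. g k (z k)) = (\<Prod>k\<in>I. (if k = m then ennreal (r (z k)) else 1)) * (\<Prod>k\<in>I. indicator (A k) (z k))"
        unfolding g_def by (rule prod.distrib)
      also have "(\<Prod>k\<in>I. (if k = m then ennreal (r (z k)) else 1)) = ennreal (r (z m))"
        using fin m by (simp add: prod.delta)
      also have "(\<Prod>k\<in>I. indicator (A k) (z k) :: ennreal) = indicator (Pi\<^sub>E I A) z"
      proof (cases "\<forall>k\<in>I. z k \<in> A k")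
        case True
        then have "z \<in> Pi\<^sub>E I A" using z by (auto simp: space_PiM PiE_def)
        then show ?thesis using True by (simp add: indicator_def)
      next
        case False
        then obtain k where k: "k \<in> I" "z k \<notin> A k" by auto
        then have "z \<notin> Pi\<^sub>E I A" by auto
        moreover have "(\<Prod>k\<in>I. indicator (A k) (z k) :: ennreal) = 0"
          using k fin by (intro prod_zero) (auto intro!: bexI[of _ k])
        ultimately show ?thesis by simp
      qed
      finally show "ennreal (r (z m)) * indicator (Pi\<^sub>E I A) z = (\<Prod>k\<in>I. g k (z k))" by simp
    qed
    also have "\<dots> = (\<Prod>k\<in>I. integral\<^sup>N P (g k))"
      by (rule product_sigma_finite.product_nn_integral_prod[OF PSF1 fin gm])
    also have "\<dots> = (\<Prod>k\<in>I. emeasure (?Mk k) (A k))"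
    proof (rule prod.cong[OF refl])
      fix k assume k: "k \<in> I"
      show "integral\<^sup>N P (g k) = emeasure (?Mk k) (A k)"
      proof (cases "k = m")
        case True
        then show ?thesis unfolding g_def using AP[OF k] rm Qd by (simp add: emeasure_density)
      next
        case False
        then show ?thesis unfolding g_def using AP[OF k] by simp
      qed
    qed
    finally show "emeasure (density (PiM I (\<lambda>_. P)) (\<lambda>z. ennreal (r (z m)))) (Pi\<^sub>E I A) = (\<Prod>k\<in>I. emeasure (?Mk k) (A k))" .
  qed
  then show ?thesis by simp
qed

lemma avg_density:
  fixes f :: "nat \<Rightarrow> 'a \<Rightarrow> ennreal"
  assumes n: "n \<ge> 1" and Md: "\<And>m. m < n \<Longrightarrow> M m = density X (f m)"
    and fm: "\<And>m. m < n \<Longrightarrow> f m \<in> borel_measurable X"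
  shows "avg_measure n M = density X (\<lambda>z. (\<Sum>m<n. f m z) / of_nat n)"
proof -
  let ?D = "density X (\<lambda>z. (\<Sum>m<n. f m z) / of_nat n)"
  have M0: "M 0 = density X (f 0)" using Md n by auto
  have sp: "space (M 0) = space X" "sets (M 0) = sets X" using M0 by auto
  have Dm: "(\<lambda>z. (\<Sum>m<n. f m z) / of_nat n) \<in> borel_measurable X" using fm by measurable
  have "avg_measure n M = measure_of (space X) (sets X) (\<lambda>A. (\<Sum>m<n. emeasure (M m) A) / of_nat n)"
    unfolding avg_measure_def sp ..
  also have "\<dots> = measure_of (space X) (sets X) (emeasure ?D)"
  proof (rule measure_of_eq)
    show "sets X \<subseteq> Pow (space X)" by (rule sets.space_closed)
    fix a assume "a \<in> sigma_sets (space X) (sets X)"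
    then have a: "a \<in> sets X" by (simp add: sets.sigma_sets_eq)
    have "emeasure ?D a = (\<integral>\<^sup>+ z. (\<Sum>m<n. f m z) / of_nat n * indicator a z \<partial>X)"
      by (rule emeasure_density[OF Dm a])
    also have "\<dots> = (\<integral>\<^sup>+ z. (\<Sum>m<n. f m z * indicator a z) / of_nat n \<partial>X)"
    proof (rule nn_integral_cong)
      fix z
      have "(\<Sum>m<n. f m z) / of_nat n * indicator a z = ((\<Sum>m<n. f m z) * indicator a z) / of_nat n"
        by (simp only: divide_ennreal_def ac_simps)
      also have "(\<Sum>m<n. f m z) * indicator a z = (\<Sum>m<n. f m z * indicator a z)"
        by (rule sum_distrib_right)
      finally show "(\<Sum>m<n. f m z) / of_nat n * indicator a z = (\<Sum>m<n. f m z * indicator a z) / of_nat n" .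
    qed
    also have "\<dots> = (\<integral>\<^sup>+ z. (\<Sum>m<n. f m z * indicator a z) \<partial>X) / of_nat n"
      by (rule nn_integral_divide) (use fm a in measurable)
    also have "(\<integral>\<^sup>+ z. (\<Sum>m<n. f m z * indicator a z) \<partial>X) = (\<Sum>m<n. \<integral>\<^sup>+ z. f m z * indicator a z \<partial>X)"
      by (rule nn_integral_sum) (use fm a in measurable)
    also have "\<dots> = (\<Sum>m<n. emeasure (M m) a)"
      by (rule sum.cong[OF refl]) (simp add: Md emeasure_density fm a)
    finally show "(\<Sum>m<n. emeasure (M m) a) / of_nat n = emeasure ?D a" by simp
  qed
  also have "\<dots> = ?D"
    using measure_of_of_measure[of ?D] by simp
  finally show ?thesis .
qed

lemma convex_hinge1: "convex_on {0..} (\<lambda>t::real. max 0 (t - \<alpha>))"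
proof (rule convex_onI)
  fix t x y :: real assume t: "0 < t" "t < 1"
  have e: "(1 - t) *\<^sub>R x + t *\<^sub>R y - \<alpha> = (1 - t) * (x - \<alpha>) + t * (y - \<alpha>)" by (simp add: algebra_simps)
  have a: "(1 - t) * (x - \<alpha>) \<le> (1 - t) * max 0 (x - \<alpha>)" using t by (intro mult_left_mono) auto
  have b: "t * (y - \<alpha>) \<le> t * max 0 (y - \<alpha>)" using t by (intro mult_left_mono) auto
  have c: "0 \<le> (1 - t) * max 0 (x - \<alpha>)" "0 \<le> t * max 0 (y - \<alpha>)" using t by auto
  show "max 0 ((1 - t) *\<^sub>R x + t *\<^sub>R y - \<alpha>) \<le> (1 - t) * max 0 (x - \<alpha>) + t * max 0 (y - \<alpha>)"
    unfolding e using a b c by linarith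
qed auto

lemma convex_hinge2: "convex_on {0..} (\<lambda>t::real. max 0 (1 - \<alpha> * t))"
proof (rule convex_onI)
  fix t x y :: real assume t: "0 < t" "t < 1"
  have e: "1 - \<alpha> * ((1 - t) *\<^sub>R x + t *\<^sub>R y) = (1 - t) * (1 - \<alpha> * x) + t * (1 - \<alpha> * y)" by (simp add: algebra_simps)
  have a: "(1 - t) * (1 - \<alpha> * x) \<le> (1 - t) * max 0 (1 - \<alpha> * x)" using t by (intro mult_left_mono) auto
  have b: "t * (1 - \<alpha> * y) \<le> t * max 0 (1 - \<alpha> * y)" using t by (intro mult_left_mono) auto
  have c: "0 \<le> (1 - t) * max 0 (1 - \<alpha> * x)" "0 \<le> t * max 0 (1 - \<alpha> * y)" using t by auto
  show "max 0 (1 - \<alpha> * ((1 - t) *\<^sub>R x + t *\<^sub>R y)) \<le> (1 - t) * max 0 (1 - \<alpha> * x) + t * max 0 (1 - \<alpha> * y)"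
    unfolding e using a b c by linarith
qed auto

lemma convex_scale:
  fixes g :: "real \<Rightarrow> real"
  assumes cv: "convex_on {0..} g" and n: "n > 0"
  shows "convex_on {0..} (\<lambda>t. g (t / n))"
proof (rule convex_onI)
  fix t x y :: real assume t: "0 < t" "t < 1" and x: "x \<in> {0..}" and y: "y \<in> {0..}"
  have e: "((1 - t) *\<^sub>R x + t *\<^sub>R y) / n = (1 - t) *\<^sub>R (x / n) + t *\<^sub>R (y / n)"
    using n by (simp add: field_simps)
  show "g (((1 - t) *\<^sub>R x + t *\<^sub>R y) / n) \<le> (1 - t) * g (x / n) + t * g (y / n)"
    unfolding e by (rule convex_onD[OF cv]) (use t x y n in auto)
qed auto

lemma fdiv_density:
  fixes h :: "'a \<Rightarrow> real" and g :: "real \<Rightarrow> real"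
  assumes sf: "sigma_finite_measure M" and hm: "h \<in> borel_measurable M"
    and h0: "\<And>z. z \<in> space M \<Longrightarrow> 0 \<le> h z" and cv: "convex_on {0..} g"
  shows "fdiv g (density M (\<lambda>z. ennreal (h z))) M = (\<integral>z. g (h z) \<partial>M)"
proof -
  have hm': "(\<lambda>z. ennreal (h z)) \<in> borel_measurable M" using hm by measurable
  have AE: "AE z in M. ennreal (h z) = RN_deriv M (density M (\<lambda>z. ennreal (h z))) z"
    by (rule sigma_finite_measure.RN_deriv_unique[OF sf hm' refl])
  show ?thesis unfolding fdiv_def
  proof (rule integral_cong_AE)
    show "(\<lambda>x. g (enn2real (RN_deriv M (density M (\<lambda>z. ennreal (h z))) x))) \<in> borel_measurable M"
      by (rule meas_convex[OF cv]) auto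
    show "(\<lambda>z. g (h z)) \<in> borel_measurable M" by (rule meas_convex[OF cv hm h0])
    show "AE x in M. g (enn2real (RN_deriv M (density M (\<lambda>z. ennreal (h z))) x)) = g (h x)"
      using AE AE_space
    proof eventually_elim
      case (elim x)
      then show ?case using h0[of x] by (metis enn2real_ennreal)
    qed
  qed
qed

lemma sumL_meas:
  fixes r :: "'a \<Rightarrow> real"
  assumes rm: "r \<in> borel_measurable P"
  shows "(\<lambda>z. (\<Sum>m<n. r (z m)) / real n) \<in> borel_measurable (PiM {..<n} (\<lambda>_. P))"
proof -
  have "(\<lambda>z. 0 + (\<Sum>m<n. r (z m))) \<in> borel_measurable (PiM {..<n} (\<lambda>_. P))"
    by (rule sum_meas[OF rm]) auto
  then have "(\<lambda>z. (\<Sum>m<n. r (z m))) \<in> borel_measurable (PiM {..<n} (\<lambda>_. P))" by simp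
  then show ?thesis by (rule borel_measurable_divide) simp
qed

lemma Qone_density:
  fixes W :: "'i \<Rightarrow> 'y measure" and r :: "'y \<Rightarrow> real"
  assumes psi: "prob_space (W i)" and psj: "prob_space (W j)"
    and Wj: "W j = density (W i) (\<lambda>y. ennreal (r y))"
    and rm: "r \<in> borel_measurable (W i)" and r0: "\<And>y. y \<in> space (W i) \<Longrightarrow> 0 \<le> r y" and n: "n \<ge> 1"
  shows "Qone W i j n = density (Qzero W i n) (\<lambda>z. ennreal ((\<Sum>m<n. r (z m)) / real n))"
proof -
  let ?P = "PiM {..<n} (\<lambda>_. W i)"
  have comp: "PiM {..<n} (\<lambda>k. if k = m then W j else W i) = density ?P (\<lambda>z. ennreal (r (z m)))" if "m < n" for m
    by (rule PiM_comp_density[OF psi psj Wj rm]) (use that in auto)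
  have "Qone W i j n = density ?P (\<lambda>z. (\<Sum>m<n. ennreal (r (z m))) / of_nat n)"
    unfolding Qone_def
  proof (rule avg_density[OF n])
    show "\<And>m. m < n \<Longrightarrow> PiM {..<n} (\<lambda>k. if k = m then W j else W i) = density ?P (\<lambda>z. ennreal (r (z m)))"
      by (rule comp)
    fix m assume "m < n"
    then have "(\<lambda>z. r (z m)) \<in> borel_measurable ?P" by (intro comp_meas[OF rm]) auto
    then show "(\<lambda>z. ennreal (r (z m))) \<in> borel_measurable ?P" by measurable
  qed
  also have "\<dots> = density ?P (\<lambda>z. ennreal ((\<Sum>m<n. r (z m)) / real n))"
  proof (rule density_cong)
    have cm: "(\<lambda>z. ennreal (r (z m))) \<in> borel_measurable ?P" if "m \<in> {..<n}" for m
    proof -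
      have "(\<lambda>z. r (z m)) \<in> borel_measurable ?P" by (rule comp_meas[OF rm that])
      then show ?thesis by measurable
    qed
    have "(\<lambda>z. (\<Sum>m<n. ennreal (r (z m)))) \<in> borel_measurable ?P"
      by (rule borel_measurable_sum[where f="\<lambda>m z. ennreal (r (z m))", OF cm])
    then show "(\<lambda>z. (\<Sum>m<n. ennreal (r (z m))) / of_nat n) \<in> borel_measurable ?P"
      by measurable
    show "(\<lambda>z. ennreal ((\<Sum>m<n. r (z m)) / real n)) \<in> borel_measurable ?P"
      using sumL_meas[OF rm, of n] by measurable
    show "AE z in ?P. (\<Sum>m<n. ennreal (r (z m))) / of_nat n = ennreal ((\<Sum>m<n. r (z m)) / real n)"
    proof (rule AE_I2)
      fix z assume z: "z \<in> space ?P"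
      have nn: "\<And>m. m \<in> {..<n} \<Longrightarrow> 0 \<le> r (z m)" using r0 space_PiM_mem[OF z] by auto
      have "(\<Sum>m<n. ennreal (r (z m))) = ennreal (\<Sum>m<n. r (z m))" using nn by (rule sum_ennreal)
      moreover have "(of_nat n :: ennreal) = ennreal (real n)" by (rule ennreal_of_nat_eq_real_of_nat)
      moreover have "0 \<le> (\<Sum>m<n. r (z m))" using nn by (rule sum_nonneg)
      ultimately show "(\<Sum>m<n. ennreal (r (z m))) / of_nat n = ennreal ((\<Sum>m<n. r (z m)) / real n)"
        using n by (simp add: divide_ennreal)
    qed
  qed
  finally show ?thesis unfolding Qzero_def .
qed

lemma sumL_bounds:
  fixes r :: "'a \<Rightarrow> real"
  assumes rb: "\<And>y. y \<in> space P \<Longrightarrow> 1/\<theta> \<le> r y \<and> r y \<le> \<theta>" and th: "\<theta> \<ge> 1" and n: "n \<ge> 1"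
    and z: "z \<in> space (PiM {..<n} (\<lambda>_. P))"
  shows "0 < (\<Sum>m<n. r (z m)) / real n" "(\<Sum>m<n. r (z m)) / real n \<le> \<theta>"
proof -
  have zs: "\<And>m. m \<in> {..<n} \<Longrightarrow> z m \<in> space P" using space_PiM_mem[OF z] by auto
  have "real (card {..<n}) * (1/\<theta>) \<le> (\<Sum>m<n. r (z m))"
    by (rule sum_bounded_below) (use zs rb in auto)
  moreover have "(\<Sum>m<n. r (z m)) \<le> real (card {..<n}) * \<theta>"
    by (rule sum_bounded_above) (use zs rb in auto)
  moreover have "0 < real n * (1/\<theta>)" using n th by simp
  ultimately have a: "0 < (\<Sum>m<n. r (z m))" "(\<Sum>m<n. r (z m)) \<le> real n * \<theta>" by auto
  show "0 < (\<Sum>m<n. r (z m)) / real n" using a n by simp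
  show "(\<Sum>m<n. r (z m)) / real n \<le> \<theta>" using a n by (simp add: divide_simps mult.commute)
qed

lemma red_fdiv:
  fixes W :: "'i \<Rightarrow> 'y measure" and r :: "'y \<Rightarrow> real" and g :: "real \<Rightarrow> real"
  assumes psi: "prob_space (W i)" and psj: "prob_space (W j)"
    and Wj: "W j = density (W i) (\<lambda>y. ennreal (r y))"
    and rm: "r \<in> borel_measurable (W i)" and rb: "\<And>y. y \<in> space (W i) \<Longrightarrow> 1/\<theta> \<le> r y \<and> r y \<le> \<theta>"
    and th: "\<theta> \<ge> 1" and n: "n \<ge> 1" and cv: "convex_on {0..} g"
  shows "fdiv g (Qone W i j n) (Qzero W i n) = (\<integral>z. g ((\<Sum>m<n. r (z m)) / real n) \<partial>Qzero W i n)"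
proof -
  have r0: "\<And>y. y \<in> space (W i) \<Longrightarrow> 0 \<le> r y"
  proof -
    fix y assume "y \<in> space (W i)"
    then have "1/\<theta> \<le> r y" using rb by auto
    moreover have "0 < 1/\<theta>" using th by simp
    ultimately show "0 \<le> r y" by linarith
  qed
  have sf: "sigma_finite_measure (Qzero W i n)" unfolding Qzero_def
    by (rule prob_space_imp_sigma_finite, rule prob_space_PiM) (use psi in auto)
  have Q1: "Qone W i j n = density (Qzero W i n) (\<lambda>z. ennreal ((\<Sum>m<n. r (z m)) / real n))"
    by (rule Qone_density[where W=W and i=i and j=j and r=r and n=n, OF psi psj Wj rm r0 n])
  show ?thesis unfolding Q1
  proof (rule fdiv_density[OF sf _ _ cv])
    show "(\<lambda>z. (\<Sum>m<n. r (z m)) / real n) \<in> borel_measurable (Qzero W i n)"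
      unfolding Qzero_def by (rule sumL_meas[OF rm])
    fix z assume "z \<in> space (Qzero W i n)"
    then show "0 \<le> (\<Sum>m<n. r (z m)) / real n"
      using sumL_bounds(1)[where P="W i" and r=r and \<theta>=\<theta> and n=n, OF rb th n] unfolding Qzero_def by (meson less_imp_le)
  qed
qed

lemma hockey_fdiv: "hockey \<alpha> P Q = fdiv (\<lambda>t. max 0 (t - \<alpha>)) P Q"
  by (simp add: hockey_def fdiv_def)

lemma red_h2:
  fixes W :: "'i \<Rightarrow> 'y measure" and r :: "'y \<Rightarrow> real"
  assumes psi: "prob_space (W i)" and psj: "prob_space (W j)"
    and Wj: "W j = density (W i) (\<lambda>y. ennreal (r y))"
    and rm: "r \<in> borel_measurable (W i)" and rb: "\<And>y. y \<in> space (W i) \<Longrightarrow> 1/\<theta> \<le> r y \<and> r y \<le> \<theta>"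
    and th: "\<theta> \<ge> 1" and n: "n \<ge> 1"
  shows "hockey \<alpha> (Qzero W i n) (Qone W i j n) = (\<integral>z. max 0 (1 - \<alpha> * ((\<Sum>m<n. r (z m)) / real n)) \<partial>Qzero W i n)"
proof -
  have r0: "\<And>y. y \<in> space (W i) \<Longrightarrow> 0 \<le> r y"
  proof -
    fix y assume "y \<in> space (W i)"
    then have "1/\<theta> \<le> r y" using rb by auto
    moreover have "0 < 1/\<theta>" using th by simp
    ultimately show "0 \<le> r y" by linarith
  qed
  define Q0 where "Q0 = Qzero W i n"
  define L where "L z = (\<Sum>m<n. r (z m)) / real n" for z
  have Lm: "L \<in> borel_measurable Q0" unfolding L_def[abs_def] Q0_def Qzero_def by (rule sumL_meas[OF rm])
  have Lpos: "0 < L z" "L z \<le> \<theta>" if "z \<in> space Q0" for z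
    using sumL_bounds[where P="W i" and r=r and \<theta>=\<theta> and n=n, OF rb th n] that unfolding Q0_def Qzero_def L_def by auto
  have ps0: "prob_space Q0" unfolding Q0_def Qzero_def by (rule prob_space_PiM) (use psi in auto)
  have Q1: "Qone W i j n = density Q0 (\<lambda>z. ennreal (L z))"
    unfolding Q0_def L_def by (rule Qone_density[where W=W and i=i and j=j and r=r and n=n, OF psi psj Wj rm r0 n])
  have Q0eq: "Q0 = density (Qone W i j n) (\<lambda>z. ennreal (1 / L z))"
  proof -
    have "density (Qone W i j n) (\<lambda>z. ennreal (1 / L z)) = density Q0 (\<lambda>z. ennreal (L z) * ennreal (1 / L z))"
    proof (unfold Q1, rule density_density_eq)
      show "(\<lambda>z. ennreal (L z)) \<in> borel_measurable Q0" using Lm by measurable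
      show "(\<lambda>z. ennreal (1 / L z)) \<in> borel_measurable Q0" using Lm by measurable
    qed
    also have "\<dots> = density Q0 (\<lambda>_. 1)"
    proof (rule density_cong)
      show "(\<lambda>z. ennreal (L z) * ennreal (1 / L z)) \<in> borel_measurable Q0" using Lm by measurable
      show "AE z in Q0. ennreal (L z) * ennreal (1 / L z) = 1"
      proof (rule AE_I2)
        fix z assume "z \<in> space Q0"
        then have "0 < L z" by (rule Lpos)
        then have "ennreal (L z) * ennreal (1 / L z) = ennreal (L z * (1 / L z))"
          by (intro ennreal_mult[symmetric]) auto
        also have "L z * (1 / L z) = 1" using \<open>0 < L z\<close> by simp
        finally show "ennreal (L z) * ennreal (1 / L z) = 1" by simp
      qed
    qed simp
    also have "\<dots> = Q0" by (rule density_1)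
    finally show ?thesis by simp
  qed
  have fin1: "finite_measure (Qone W i j n)"
  proof (rule finite_measureI)
    have "emeasure (Qone W i j n) (space (Qone W i j n)) = (\<integral>\<^sup>+ z. ennreal (L z) * indicator (space Q0) z \<partial>Q0)"
      unfolding Q1 using Lm by (simp add: emeasure_density)
    also have "\<dots> \<le> (\<integral>\<^sup>+ z. ennreal \<theta> \<partial>Q0)"
      using Lpos by (intro nn_integral_mono) (auto simp: indicator_def intro!: ennreal_leI)
    also have "\<dots> = ennreal \<theta>" using ps0 by (simp add: prob_space.emeasure_space_1)
    finally show "emeasure (Qone W i j n) (space (Qone W i j n)) \<noteq> \<infinity>"
      using ennreal_less_top[of \<theta>] by (simp add: top_unique) (metis ennreal_less_top infinity_ennreal_def le_less_trans less_irrefl)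
  qed
  have "hockey \<alpha> (Qzero W i n) (Qone W i j n) = fdiv (\<lambda>t. max 0 (t - \<alpha>)) (density (Qone W i j n) (\<lambda>z. ennreal (1 / L z))) (Qone W i j n)"
    unfolding hockey_fdiv Q0_def[symmetric] using Q0eq by simp
  also have "\<dots> = (\<integral>z. max 0 (1 / L z - \<alpha>) \<partial>Qone W i j n)"
  proof (rule fdiv_density[OF finite_measure.sigma_finite_measure[OF fin1] _ _ convex_hinge1])
    show "(\<lambda>z. 1 / L z) \<in> borel_measurable (Qone W i j n)" unfolding Q1 using Lm by measurable
    fix z assume "z \<in> space (Qone W i j n)"
    then have "0 < L z" unfolding Q1 by (intro Lpos) simp
    then show "0 \<le> 1 / L z" by simp
  qed
  also have "\<dots> = (\<integral>z. L z *\<^sub>R max 0 (1 / L z - \<alpha>) \<partial>Q0)"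
  proof (unfold Q1, rule integral_density)
    show "(\<lambda>z. max 0 (1 / L z - \<alpha>)) \<in> borel_measurable Q0" using Lm by measurable
    show "L \<in> borel_measurable Q0" by (rule Lm)
    show "AE z in Q0. 0 \<le> L z" by (rule AE_I2) (use Lpos in \<open>auto intro: less_imp_le\<close>)
  qed
  also have "\<dots> = (\<integral>z. max 0 (1 - \<alpha> * L z) \<partial>Q0)"
  proof (rule Bochner_Integration.integral_cong[OF refl])
    fix z assume "z \<in> space Q0"
    then have Lp: "0 < L z" by (rule Lpos)
    have e: "L z * (1 / L z - \<alpha>) = 1 - \<alpha> * L z" using Lp by (simp add: field_simps)
    have "L z * max 0 (1 / L z - \<alpha>) = max 0 (L z * (1 / L z - \<alpha>))"
    proof (cases "1 / L z - \<alpha> \<le> 0")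
      case True
      then have "L z * (1 / L z - \<alpha>) \<le> 0" using Lp by (intro mult_nonneg_nonpos) auto
      then show ?thesis using True by simp
    next
      case False
      then have "0 \<le> L z * (1 / L z - \<alpha>)" using Lp by (intro mult_nonneg_nonneg) auto
      then show ?thesis using False by simp
    qed
    moreover note e
    ultimately show "L z *\<^sub>R max 0 (1 / L z - \<alpha>) = max 0 (1 - \<alpha> * L z)" by simp
  qed
  finally show ?thesis unfolding Q0_def L_def .
qed

lemma r_int1:
  fixes W :: "'i \<Rightarrow> 'y measure" and r :: "'y \<Rightarrow> real"
  assumes psi: "prob_space (W i)" and psj: "prob_space (W j)"
    and Wj: "W j = density (W i) (\<lambda>y. ennreal (r y))"
    and rm: "r \<in> borel_measurable (W i)" and rb: "\<And>y. y \<in> space (W i) \<Longrightarrow> 1/\<theta> \<le> r y \<and> r y \<le> \<theta>"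
    and th: "\<theta> \<ge> 1"
  shows "(\<integral>y. r y \<partial>W i) = 1"
proof -
  have r0: "0 \<le> r y" if "y \<in> space (W i)" for y
  proof -
    have "1/\<theta> \<le> r y" using rb that by auto
    moreover have "0 < 1/\<theta>" using th by simp
    ultimately show "0 \<le> r y" by linarith
  qed
  have ir: "integrable (W i) r" by (rule r_integrable[OF psi rm rb th])
  have "1 = emeasure (W j) (space (W j))" using psj by (simp add: prob_space.emeasure_space_1)
  also have "\<dots> = emeasure (density (W i) (\<lambda>y. ennreal (r y))) (space (W i))" using Wj by simp
  also have "\<dots> = (\<integral>\<^sup>+ y. ennreal (r y) * indicator (space (W i)) y \<partial>W i)"
    using rm by (simp add: emeasure_density)
  also have "\<dots> = (\<integral>\<^sup>+ y. ennreal (r y) \<partial>W i)"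
    by (rule nn_integral_cong) simp
  also have "\<dots> = ennreal (\<integral>y. r y \<partial>W i)"
    by (rule nn_integral_eq_integral[OF ir]) (use r0 in \<open>auto intro: AE_I2\<close>)
  finally show ?thesis by simp
qed

lemma sum_UNIV_bool: "(\<Sum>y\<in>(UNIV::bool set). F y) = F True + F False"
  by (simp add: UNIV_bool add.commute)

lemma master:
  fixes W :: "'i \<Rightarrow> 'y measure" and r :: "'y \<Rightarrow> real" and g :: "real \<Rightarrow> real"
  assumes psi: "prob_space (W i)" and psj: "prob_space (W j)"
    and Wj: "W j = density (W i) (\<lambda>y. ennreal (r y))"
    and rm: "r \<in> borel_measurable (W i)" and rb: "\<And>y. y \<in> space (W i) \<Longrightarrow> 1/\<theta> \<le> r y \<and> r y \<le> \<theta>"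
    and th: "\<theta> \<ge> 1" and n: "n \<ge> 1" and cv: "convex_on {0..} g"
  shows "(\<integral>z. g ((\<Sum>m<n. r (z m)) / real n) \<partial>Qzero W i n) \<le> Bn \<theta> (\<lambda>t. g (t / real n)) n 0 \<and>
    ((AE y in W i. r y = 1/\<theta> \<or> r y = \<theta>) \<longrightarrow>
      (\<integral>z. g ((\<Sum>m<n. r (z m)) / real n) \<partial>Qzero W i n) = Bn \<theta> (\<lambda>t. g (t / real n)) n 0)"
proof -
  have ri: "(\<integral>y. r y \<partial>W i) = 1" by (rule r_int1[where W=W and i=i and j=j and r=r and \<theta>=\<theta>, OF psi psj Wj rm rb th])
  have cv': "convex_on {0..} (\<lambda>t. g (t / real n))" by (rule convex_scale[OF cv]) (use n in auto)
  have "(0::real) \<le> 0" by simp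
  from LN[OF psi rm rb th ri cv' this, of n]
  show ?thesis unfolding Qzero_def by simp
qed

lemma BRR_props:
  fixes \<epsilon>0 :: real
  assumes e: "\<epsilon>0 \<ge> 0"
  defines "\<theta> \<equiv> exp \<epsilon>0"
  defines "rB \<equiv> (\<lambda>b::bool. if b then 1/\<theta> else \<theta>)"
  shows "prob_space (BRR \<epsilon>0 0)" "prob_space (BRR \<epsilon>0 1)"
    "BRR \<epsilon>0 1 = density (BRR \<epsilon>0 0) (\<lambda>y. ennreal (rB y))"
    "rB \<in> borel_measurable (BRR \<epsilon>0 0)" "\<And>y. y \<in> space (BRR \<epsilon>0 0) \<Longrightarrow> 1/\<theta> \<le> rB y \<and> rB y \<le> \<theta>"
    "\<theta> \<ge> 1" "AE y in BRR \<epsilon>0 0. rB y = 1/\<theta> \<or> rB y = \<theta>"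
proof -
  show th: "\<theta> \<ge> 1" unfolding \<theta>_def using e by simp
  then have thp: "\<theta> > 0" by simp
  show "prob_space (BRR \<epsilon>0 0)" "prob_space (BRR \<epsilon>0 1)" unfolding BRR_def by (simp_all add: prob_space_measure_pmf)
  show "rB \<in> borel_measurable (BRR \<epsilon>0 0)" unfolding BRR_def by simp
  have inv: "1/\<theta> \<le> \<theta>" using th by (smt (verit) divide_le_eq_1_pos thp)
  show "\<And>y. y \<in> space (BRR \<epsilon>0 0) \<Longrightarrow> 1/\<theta> \<le> rB y \<and> rB y \<le> \<theta>" unfolding rB_def using inv by auto
  show "AE y in BRR \<epsilon>0 0. rB y = 1/\<theta> \<or> rB y = \<theta>" unfolding rB_def by (intro AE_I2) auto
  define p where "p = \<theta> / (1 + \<theta>)"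
  define q where "q = 1 / (1 + \<theta>)"
  have B0: "BRR \<epsilon>0 0 = measure_pmf (bernoulli_pmf p)" unfolding BRR_def p_def \<theta>_def by simp
  have B1: "BRR \<epsilon>0 1 = measure_pmf (bernoulli_pmf q)" unfolding BRR_def q_def \<theta>_def by simp
  have p01: "0 \<le> p" "p \<le> 1" unfolding p_def using thp by auto
  have q01: "0 \<le> q" "q \<le> 1" unfolding q_def using thp by auto
  have e1: "1/\<theta> * p = q" unfolding p_def q_def using thp by simp
  have e2: "\<theta> * (1 - p) = 1 - q" unfolding p_def q_def using thp by (simp add: field_simps)
  show "BRR \<epsilon>0 1 = density (BRR \<epsilon>0 0) (\<lambda>y. ennreal (rB y))"
  proof (rule measure_eqI)
    show "sets (BRR \<epsilon>0 1) = sets (density (BRR \<epsilon>0 0) (\<lambda>y. ennreal (rB y)))" unfolding B0 B1 by simp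
    fix A assume "A \<in> sets (BRR \<epsilon>0 1)"
    have "emeasure (density (BRR \<epsilon>0 0) (\<lambda>y. ennreal (rB y))) A = (\<integral>\<^sup>+ y. ennreal (rB y) * indicator A y \<partial>bernoulli_pmf p)"
      unfolding B0 by (simp add: emeasure_density)
    also have "\<dots> = (\<Sum>y\<in>UNIV. ennreal (rB y) * indicator A y * pmf (bernoulli_pmf p) y)"
      by (rule nn_integral_measure_pmf_support) auto
    also have "\<dots> = ennreal (rB True) * indicator A True * ennreal p + ennreal (rB False) * indicator A False * ennreal (1 - p)"
      using p01 by (simp add: UNIV_bool)
    also have "\<dots> = indicator A True * ennreal q + indicator A False * ennreal (1 - q)"
    proof -
      have a: "ennreal (rB True) * ennreal p = ennreal q"
        unfolding rB_def using e1 thp p01 by (simp add: ennreal_mult[symmetric] del: ennreal_mult')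
      have b: "ennreal (rB False) * ennreal (1 - p) = ennreal (1 - q)"
        unfolding rB_def using e2 thp p01 by (simp add: ennreal_mult[symmetric] del: ennreal_mult')
      have c: "ennreal (rB True) * indicator A True * ennreal p = indicator A True * (ennreal (rB True) * ennreal p)"
        by (simp only: mult_ac)
      have d: "ennreal (rB False) * indicator A False * ennreal (1 - p) = indicator A False * (ennreal (rB False) * ennreal (1 - p))"
        by (simp only: mult_ac)
      show ?thesis unfolding c d a b ..
    qed
    also have "\<dots> = (\<Sum>y\<in>UNIV. (indicator A y :: ennreal) * ennreal (pmf (bernoulli_pmf q) y))"
      unfolding sum_UNIV_bool using q01 by (simp split: split_indicator)
    also have "\<dots> = (\<integral>\<^sup>+ y. indicator A y \<partial>bernoulli_pmf q)"
      by (rule nn_integral_measure_pmf_support[symmetric]) auto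
    also have "\<dots> = emeasure (BRR \<epsilon>0 1) A" unfolding B1 by simp
    finally show "emeasure (BRR \<epsilon>0 1) A = emeasure (density (BRR \<epsilon>0 0) (\<lambda>y. ennreal (rB y))) A" by simp
  qed
qed

lemma gen_r:
  fixes Wi Wj :: "'y measure"
  assumes psi: "prob_space Wi" and psj: "prob_space Wj" and sets_eq: "sets Wj = sets Wi"
    and ldp1: "\<And>B. B \<in> sets Wi \<Longrightarrow> emeasure Wj B \<le> ennreal \<theta> * emeasure Wi B"
    and ldp2: "\<And>B. B \<in> sets Wi \<Longrightarrow> emeasure Wi B \<le> ennreal \<theta> * emeasure Wj B"
    and th: "\<theta> \<ge> 1"
  shows "\<exists>r. Wj = density Wi (\<lambda>y. ennreal (r y)) \<and> r \<in> borel_measurable Wi \<and>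
             (\<forall>y\<in>space Wi. 1/\<theta> \<le> r y \<and> r y \<le> \<theta>)"
proof -
  have thp: "0 < \<theta>" using th by simp
  have sf: "sigma_finite_measure Wi" using psi by (rule prob_space_imp_sigma_finite)
  have ac: "absolutely_continuous Wi Wj"
    unfolding absolutely_continuous_def
  proof
    fix B assume B: "B \<in> null_sets Wi"
    then have Bs: "B \<in> sets Wi" and B0: "emeasure Wi B = 0" by auto
    have "emeasure Wj B \<le> 0" using ldp1[OF Bs] B0 by simp
    then show "B \<in> null_sets Wj" using Bs sets_eq by (auto intro: null_setsI)
  qed
  define q where "q = RN_deriv Wi Wj"
  have qm: "q \<in> borel_measurable Wi" unfolding q_def by simp
  have D: "density Wi q = Wj" unfolding q_def
    by (rule sigma_finite_measure.density_RN_deriv[OF sf ac sets_eq])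
  have dens: "emeasure Wj B = (\<integral>\<^sup>+ x. q x * indicator B x \<partial>Wi)" if "B \<in> sets Wi" for B
    using D[symmetric] qm that by (simp add: emeasure_density)
  have finj: "emeasure Wj B \<noteq> \<infinity>" for B using psj by (simp add: prob_space.emeasure_le_1 finite_measure.emeasure_finite prob_space_def)
  have fini: "emeasure Wi B \<noteq> \<infinity>" for B using psi by (simp add: finite_measure.emeasure_finite prob_space_def)
  define B where "B = {x \<in> space Wi. ennreal \<theta> < q x}"
  have Bs: "B \<in> sets Wi" unfolding B_def using qm by measurable
  have Bnull: "B \<in> null_sets Wi"
  proof (rule ccontr)
    assume nn: "B \<notin> null_sets Wi"
    let ?f = "\<lambda>x. ennreal \<theta> * indicator B x" and ?g = "\<lambda>x. q x * indicator B x"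
    have fi: "(\<integral>\<^sup>+ x. ?f x \<partial>Wi) = ennreal \<theta> * emeasure Wi B"
      by (rule nn_integral_cmult_indicator[OF Bs])
    have "(\<integral>\<^sup>+ x. ?f x \<partial>Wi) < (\<integral>\<^sup>+ x. ?g x \<partial>Wi)"
    proof (rule nn_integral_less)
      show "?f \<in> borel_measurable Wi" using Bs by measurable
      show "?g \<in> borel_measurable Wi" using Bs qm by measurable
      show "(\<integral>\<^sup>+ x. ?f x \<partial>Wi) \<noteq> \<infinity>" unfolding fi using fini[of B]
        by (simp add: ennreal_mult_eq_top_iff)
      show "AE x in Wi. ?f x \<le> ?g x"
        by (rule AE_I2) (auto simp: B_def indicator_def less_imp_le)
      show "\<not> (AE x in Wi. ?g x \<le> ?f x)"
      proof
        assume "AE x in Wi. ?g x \<le> ?f x"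
        then have "AE x in Wi. x \<notin> B"
          by eventually_elim (auto simp: B_def indicator_def split: if_splits)
        then have "B \<in> null_sets Wi" using AE_iff_null_sets[OF Bs] by simp
        then show False using nn by simp
      qed
    qed
    also have "\<dots> = emeasure Wj B" by (rule dens[OF Bs, symmetric])
    also have "\<dots> \<le> ennreal \<theta> * emeasure Wi B" by (rule ldp1[OF Bs])
    finally show False unfolding fi by simp
  qed
  have AEup: "AE x in Wi. q x \<le> ennreal \<theta>"
    using AE_iff_null_sets[OF Bs, THEN iffD1, OF Bnull] AE_space
    by eventually_elim (auto simp: B_def not_less)
  define B' where "B' = {x \<in> space Wi. q x < ennreal (1/\<theta>)}"
  have Bs': "B' \<in> sets Wi" unfolding B'_def using qm by measurable
  have Bnull': "B' \<in> null_sets Wi"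
  proof (rule ccontr)
    assume nn: "B' \<notin> null_sets Wi"
    let ?f = "\<lambda>x. ennreal \<theta> * (q x * indicator B' x)" and ?g = "\<lambda>x. indicator B' x :: ennreal"
    have fi: "(\<integral>\<^sup>+ x. ?f x \<partial>Wi) = ennreal \<theta> * emeasure Wj B'"
      using qm Bs' by (simp add: nn_integral_cmult dens[OF Bs'])
    have key: "ennreal \<theta> * q x < 1" if "x \<in> B'" for x
    proof -
      have lt: "q x < ennreal (1/\<theta>)" using that by (simp add: B'_def)
      show ?thesis
      proof (cases "q x")
        case (real t)
        then have "t < 1/\<theta>" using lt by (simp add: ennreal_less_iff)
        then have "\<theta> * t < 1" using thp by (simp add: field_simps)
        moreover have "ennreal \<theta> * ennreal t = ennreal (\<theta> * t)" using real thp by (simp add: ennreal_mult)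
        moreover have "0 \<le> \<theta> * t" using real thp by simp
        ultimately have "ennreal (\<theta> * t) < ennreal 1" by (subst ennreal_less_iff) auto
        then show ?thesis using real \<open>ennreal \<theta> * ennreal t = ennreal (\<theta> * t)\<close> by simp
      next
        case top
        then show ?thesis using lt by simp
      qed
    qed
    have "(\<integral>\<^sup>+ x. ?f x \<partial>Wi) < (\<integral>\<^sup>+ x. ?g x \<partial>Wi)"
    proof (rule nn_integral_less)
      show "?f \<in> borel_measurable Wi" using Bs' qm by measurable
      show "?g \<in> borel_measurable Wi" using Bs' by measurable
      show "(\<integral>\<^sup>+ x. ?f x \<partial>Wi) \<noteq> \<infinity>" unfolding fi using finj[of B']
        by (simp add: ennreal_mult_eq_top_iff)
      show "AE x in Wi. ?f x \<le> ?g x"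
      proof (rule AE_I2)
        fix x show "?f x \<le> ?g x"
          using key[of x] by (cases "x \<in> B'") (auto simp: less_imp_le)
      qed
      show "\<not> (AE x in Wi. ?g x \<le> ?f x)"
      proof
        assume "AE x in Wi. ?g x \<le> ?f x"
        then have "AE x in Wi. x \<notin> B'"
        proof eventually_elim
          case (elim x)
          show "x \<notin> B'"
          proof
            assume xB: "x \<in> B'"
            then have "1 \<le> ennreal \<theta> * q x" using elim by simp
            then show False using key[OF xB] by simp
          qed
        qed
        then have "B' \<in> null_sets Wi" using AE_iff_null_sets[OF Bs'] by simp
        then show False using nn by simp
      qed
    qed
    also have "\<dots> = emeasure Wi B'" using Bs' by simp
    also have "\<dots> \<le> ennreal \<theta> * emeasure Wj B'" by (rule ldp2[OF Bs'])
    finally show False unfolding fi by simp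
  qed
  have AElo: "AE x in Wi. ennreal (1/\<theta>) \<le> q x"
    using AE_iff_null_sets[OF Bs', THEN iffD1, OF Bnull'] AE_space
    by eventually_elim (auto simp: B'_def not_less)
  define r where "r x = max (1/\<theta>) (min \<theta> (enn2real (q x)))" for x
  have inv: "1/\<theta> \<le> \<theta>" using th by (smt (verit) divide_le_eq_1_pos thp)
  have rm: "r \<in> borel_measurable Wi" unfolding r_def[abs_def] using qm by measurable
  have rb: "\<forall>y\<in>space Wi. 1/\<theta> \<le> r y \<and> r y \<le> \<theta>" unfolding r_def using inv by auto
  have "Wj = density Wi q" using D by simp
  also have "\<dots> = density Wi (\<lambda>y. ennreal (r y))"
  proof (rule density_cong[OF qm])
    show "(\<lambda>y. ennreal (r y)) \<in> borel_measurable Wi" using rm by measurable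
    show "AE x in Wi. q x = ennreal (r x)"
      using AEup AElo
    proof eventually_elim
      case (elim x)
      show ?case
      proof (cases "q x")
        case (real t)
        then have "t \<le> \<theta>" "1/\<theta> \<le> t" using elim thp by (auto simp: ennreal_le_iff)
        then have "r x = t" unfolding r_def using real by simp
        then show ?thesis using real by simp
      next
        case top
        then show ?thesis using elim by (simp add: top_unique)
      qed
    qed
  qed
  finally show ?thesis using rm rb by blast
qed

lemma W_prob:
  assumes an: "anchored d H \<rho>" and k: "k < d"
  shows "prob_space (Wrho d H \<rho> k)"
proof -
  have ps: "prob_space \<rho>" and AEX: "AE x in \<rho>. x \<in> Xset d H"
    and int: "\<And>k'. k' < d - 1 \<Longrightarrow> integrable \<rho> (\<lambda>x. x k') \<and> (\<integral>x. x k' \<partial>\<rho>) = 0"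
    using an unfolding anchored_def by auto
  define w where "w x = 1 + (\<Sum>k'<d-1. H k k' * x k')" for x :: "nat \<Rightarrow> real"
  have ic: "integrable \<rho> (\<lambda>x. 1::real)" using ps by (simp add: prob_space_def finite_measure.integrable_const)
  have isum: "integrable \<rho> (\<lambda>x. \<Sum>k'<d-1. H k k' * x k')"
    by (rule Bochner_Integration.integrable_sum) (use int in auto)
  have wint: "integrable \<rho> w" unfolding w_def[abs_def]
    by (rule Bochner_Integration.integrable_add[OF ic isum])
  have "(\<integral>x. w x \<partial>\<rho>) = (\<integral>x. 1 \<partial>\<rho>) + (\<integral>x. (\<Sum>k'<d-1. H k k' * x k') \<partial>\<rho>)"
    unfolding w_def by (rule Bochner_Integration.integral_add[OF ic isum])
  also have "(\<integral>x. (\<Sum>k'<d-1. H k k' * x k') \<partial>\<rho>) = (\<Sum>k'<d-1. (\<integral>x. H k k' * x k' \<partial>\<rho>))"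
    by (rule Bochner_Integration.integral_sum) (use int in auto)
  also have "\<dots> = 0" using int by simp
  finally have wval: "(\<integral>x. w x \<partial>\<rho>) = 1" using ps by (simp add: prob_space.prob_space)
  have w0: "AE x in \<rho>. 0 \<le> w x"
    using AEX by eventually_elim (use k in \<open>auto simp: Xset_def w_def gam_dot_def\<close>)
  have wm: "w \<in> borel_measurable \<rho>" using wint by auto
  have Weq: "Wrho d H \<rho> k = density \<rho> (\<lambda>x. ennreal (w x))"
    unfolding Wrho_def w_def gam_dot_def ..
  show ?thesis unfolding Weq
  proof (rule prob_spaceI)
    have "emeasure (density \<rho> (\<lambda>x. ennreal (w x))) (space (density \<rho> (\<lambda>x. ennreal (w x))))
        = (\<integral>\<^sup>+ x. ennreal (w x) * indicator (space \<rho>) x \<partial>\<rho>)"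
      using wm by (simp add: emeasure_density)
    also have "\<dots> = (\<integral>\<^sup>+ x. ennreal (w x) \<partial>\<rho>)" by (rule nn_integral_cong) simp
    also have "\<dots> = ennreal (\<integral>x. w x \<partial>\<rho>)" by (rule nn_integral_eq_integral[OF wint w0])
    finally show "emeasure (density \<rho> (\<lambda>x. ennreal (w x))) (space (density \<rho> (\<lambda>x. ennreal (w x)))) = 1"
      using wval by simp
  qed
qed

lemma adm_r:
  assumes adm: "(d, \<rho>, i, j) \<in> admissible HH \<epsilon>0" and e0: "\<epsilon>0 \<ge> 0"
  defines "W \<equiv> Wrho d (HH d) \<rho>"
  shows "prob_space (W i) \<and> prob_space (W j) \<and>
    (\<exists>r. W j = density (W i) (\<lambda>y. ennreal (r y)) \<and> r \<in> borel_measurable (W i) \<and>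
             (\<forall>y\<in>space (W i). 1/exp \<epsilon>0 \<le> r y \<and> r y \<le> exp \<epsilon>0))"
proof -
  have d: "2 \<le> d" and an: "anchored d (HH d) \<rho>" and ldp: "is_LDP \<epsilon>0 {..<d} W"
    and ij: "i < d" "j < d"
    using adm unfolding admissible_def W_def by auto
  have psi: "prob_space (W i)" unfolding W_def by (rule W_prob[OF an ij(1)])
  have psj: "prob_space (W j)" unfolding W_def by (rule W_prob[OF an ij(2)])
  have se: "sets (W j) = sets (W i)" unfolding W_def Wrho_def by simp
  have l1: "\<And>B. B \<in> sets (W i) \<Longrightarrow> emeasure (W j) B \<le> ennreal (exp \<epsilon>0) * emeasure (W i) B"
    using ldp ij unfolding is_LDP_def by auto
  have l2: "\<And>B. B \<in> sets (W i) \<Longrightarrow> emeasure (W i) B \<le> ennreal (exp \<epsilon>0) * emeasure (W j) B"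
    using ldp ij se unfolding is_LDP_def by auto
  have th: "exp \<epsilon>0 \<ge> 1" using e0 by simp
  from gen_r[OF psi psj se l1 l2 th] psi psj show ?thesis by blast
qed

lemma V1:
  fixes W :: "'i \<Rightarrow> 'y measure" and r :: "'y \<Rightarrow> real" and g :: "real \<Rightarrow> real"
  assumes psi: "prob_space (W i)" and psj: "prob_space (W j)"
    and Wj: "W j = density (W i) (\<lambda>y. ennreal (r y))"
    and rm: "r \<in> borel_measurable (W i)" and rb: "\<And>y. y \<in> space (W i) \<Longrightarrow> 1/\<theta> \<le> r y \<and> r y \<le> \<theta>"
    and th: "\<theta> \<ge> 1" and n: "n \<ge> 1" and cv: "convex_on {0..} g"
  shows "fdiv g (Qone W i j n) (Qzero W i n) \<le> Bn \<theta> (\<lambda>t. g (t / real n)) n 0 \<and>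
    ((AE y in W i. r y = 1/\<theta> \<or> r y = \<theta>) \<longrightarrow> fdiv g (Qone W i j n) (Qzero W i n) = Bn \<theta> (\<lambda>t. g (t / real n)) n 0)"
proof -
  have e: "fdiv g (Qone W i j n) (Qzero W i n) = (\<integral>z. g ((\<Sum>m<n. r (z m)) / real n) \<partial>Qzero W i n)"
    by (rule red_fdiv[where W=W and i=i and j=j and r=r and \<theta>=\<theta> and n=n, OF psi psj Wj rm rb th n cv])
  have m: "(\<integral>z. g ((\<Sum>m<n. r (z m)) / real n) \<partial>Qzero W i n) \<le> Bn \<theta> (\<lambda>t. g (t / real n)) n 0 \<and>
    ((AE y in W i. r y = 1/\<theta> \<or> r y = \<theta>) \<longrightarrow>
      (\<integral>z. g ((\<Sum>m<n. r (z m)) / real n) \<partial>Qzero W i n) = Bn \<theta> (\<lambda>t. g (t / real n)) n 0)"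
    by (rule master[where W=W and i=i and j=j and r=r and \<theta>=\<theta> and n=n, OF psi psj Wj rm rb th n cv])
  show ?thesis using m unfolding e by blast
qed

lemma V2:
  fixes W :: "'i \<Rightarrow> 'y measure" and r :: "'y \<Rightarrow> real"
  assumes psi: "prob_space (W i)" and psj: "prob_space (W j)"
    and Wj: "W j = density (W i) (\<lambda>y. ennreal (r y))"
    and rm: "r \<in> borel_measurable (W i)" and rb: "\<And>y. y \<in> space (W i) \<Longrightarrow> 1/\<theta> \<le> r y \<and> r y \<le> \<theta>"
    and th: "\<theta> \<ge> 1" and n: "n \<ge> 1"
  shows "hockey \<alpha> (Qone W i j n) (Qzero W i n) \<le> Bn \<theta> (\<lambda>t. max 0 (t / real n - \<alpha>)) n 0 \<and>
    ((AE y in W i. r y = 1/\<theta> \<or> r y = \<theta>) \<longrightarrow> hockey \<alpha> (Qone W i j n) (Qzero W i n) = Bn \<theta> (\<lambda>t. max 0 (t / real n - \<alpha>)) n 0)"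
  unfolding hockey_fdiv
  by (rule V1[where W=W and i=i and j=j and r=r and \<theta>=\<theta> and n=n, OF psi psj Wj rm rb th n convex_hinge1])

lemma V3:
  fixes W :: "'i \<Rightarrow> 'y measure" and r :: "'y \<Rightarrow> real"
  assumes psi: "prob_space (W i)" and psj: "prob_space (W j)"
    and Wj: "W j = density (W i) (\<lambda>y. ennreal (r y))"
    and rm: "r \<in> borel_measurable (W i)" and rb: "\<And>y. y \<in> space (W i) \<Longrightarrow> 1/\<theta> \<le> r y \<and> r y \<le> \<theta>"
    and th: "\<theta> \<ge> 1" and n: "n \<ge> 1"
  shows "hockey \<alpha> (Qzero W i n) (Qone W i j n) \<le> Bn \<theta> (\<lambda>t. max 0 (1 - \<alpha> * (t / real n))) n 0 \<and>
    ((AE y in W i. r y = 1/\<theta> \<or> r y = \<theta>) \<longrightarrow> hockey \<alpha> (Qzero W i n) (Qone W i j n) = Bn \<theta> (\<lambda>t. max 0 (1 - \<alpha> * (t / real n))) n 0)"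
proof -
  have e: "hockey \<alpha> (Qzero W i n) (Qone W i j n) = (\<integral>z. max 0 (1 - \<alpha> * ((\<Sum>m<n. r (z m)) / real n)) \<partial>Qzero W i n)"
    by (rule red_h2[where W=W and i=i and j=j and r=r and \<theta>=\<theta> and n=n, OF psi psj Wj rm rb th n])
  have m: "(\<integral>z. max 0 (1 - \<alpha> * ((\<Sum>m<n. r (z m)) / real n)) \<partial>Qzero W i n) \<le> Bn \<theta> (\<lambda>t. max 0 (1 - \<alpha> * (t / real n))) n 0 \<and>
    ((AE y in W i. r y = 1/\<theta> \<or> r y = \<theta>) \<longrightarrow>
      (\<integral>z. max 0 (1 - \<alpha> * ((\<Sum>m<n. r (z m)) / real n)) \<partial>Qzero W i n) = Bn \<theta> (\<lambda>t. max 0 (1 - \<alpha> * (t / real n))) n 0)"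
    by (rule master[where W=W and i=i and j=j and r=r and \<theta>=\<theta> and n=n and g="\<lambda>t. max 0 (1 - \<alpha> * t)", OF psi psj Wj rm rb th n convex_hinge2])
  show ?thesis using m unfolding e by blast
qed

lemma sup_attain:
  fixes F :: "'a \<Rightarrow> ereal"
  assumes "\<And>x. x \<in> A \<Longrightarrow> F x \<le> v" and "a \<in> A" and "F a = v"
  shows "(SUP x\<in>A. F x) = v"
  by (rule antisym) (use assms in \<open>auto intro: SUP_least SUP_upper2\<close>)

lemma t_facts:
  fixes \<theta> :: real assumes th: "\<theta> \<ge> 1"
  defines "t \<equiv> (\<theta> - 1) / (\<theta> + 1)"
  shows "0 \<le> t" "t < 1" "\<theta> * (1 - t) = 1 + t" "(1 + t) / \<theta> = 1 - t"
    "(1 - t) / (1 + t) = 1 / \<theta>" "(1 + t) / (1 - t) = \<theta>"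
proof -
  have p: "\<theta> + 1 > 0" using th by simp
  have sq: "0 \<le> \<theta> * \<theta>" by simp
  have nz: "\<theta> \<noteq> 0" "\<theta> + 1 \<noteq> 0" "\<theta> + \<theta> * \<theta> \<noteq> 0" "\<theta> * 2 + \<theta> * (\<theta> * 2) \<noteq> 0"
    using th sq by linarith+
  show "0 \<le> t" unfolding t_def using th by simp
  show "t < 1" unfolding t_def using th p by (simp add: divide_less_eq)
  have a: "1 - t = 2 / (\<theta> + 1)" unfolding t_def using p by (simp add: field_simps)
  have b: "1 + t = 2 * \<theta> / (\<theta> + 1)" unfolding t_def using p by (simp add: field_simps)
  show "\<theta> * (1 - t) = 1 + t" unfolding a b using nz by (simp add: field_simps)
  show "(1 + t) / \<theta> = 1 - t" unfolding a b using nz by (simp add: field_simps)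
  show "(1 - t) / (1 + t) = 1 / \<theta>" unfolding a b using nz by (simp add: field_simps)
  show "(1 + t) / (1 - t) = \<theta>" unfolding a b using nz by (simp add: field_simps)
qed

lemma witness:
  fixes HH :: "nat \<Rightarrow> nat \<Rightarrow> nat \<Rightarrow> real" and \<epsilon>0 :: real
  assumes vH: "valid_H 2 (HH 2)" and e0: "\<epsilon>0 \<ge> 0"
  shows "\<exists>\<rho>. (2, \<rho>, 0, 1) \<in> admissible HH \<epsilon>0 \<and>
     (\<exists>r. Wrho 2 (HH 2) \<rho> 1 = density (Wrho 2 (HH 2) \<rho> 0) (\<lambda>y. ennreal (r y)) \<and>
          r \<in> borel_measurable (Wrho 2 (HH 2) \<rho> 0) \<and>
          (\<forall>y\<in>space (Wrho 2 (HH 2) \<rho> 0). 1/exp \<epsilon>0 \<le> r y \<and> r y \<le> exp \<epsilon>0) \<and>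
          (AE y in Wrho 2 (HH 2) \<rho> 0. r y = 1/exp \<epsilon>0 \<or> r y = exp \<epsilon>0))"
proof -
  define H where "H = HH 2"
  define \<theta> where "\<theta> = exp \<epsilon>0"
  have th: "\<theta> \<ge> 1" unfolding \<theta>_def using e0 by simp
  have thp: "\<theta> > 0" using th by simp
  define t where "t = (\<theta> - 1) / (\<theta> + 1)"
  note tf = t_facts[OF th, folded t_def]
  define u where "u = (\<lambda>i::nat. if i = 0 then 1 else if i = 1 then -1 else (0::real))"
  have l1: "{..<(1::nat)} = {0}" by auto
  have l2: "{..<(2::nat)} = {0, 1}" by auto
  have "u \<in> {u :: nat \<Rightarrow> real. (\<forall>i\<ge>2. u i = 0) \<and> (\<Sum>i<2. u i) = 0}"
    unfolding u_def l2 by auto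
  then have "u \<in> {(\<lambda>i. if i < 2 then (\<Sum>k<2-1. c k * H i k) else 0) | c. True}"
    using vH unfolding valid_H_def H_def by blast
  then obtain c where c: "u = (\<lambda>i. if i < 2 then (\<Sum>k<2-1. c k * H i k) else 0)" by blast
  have c0: "c 0 * H 0 0 = 1" using fun_cong[OF c, of 0] unfolding u_def by (simp add: l1)
  have c1: "c 0 * H 1 0 = -1" using fun_cong[OF c, of 1] unfolding u_def by (simp add: l1)
  define h where "h = H 0 0"
  have h0: "h \<noteq> 0" using c0 unfolding h_def by auto
  have h1: "H 1 0 = - h"
  proof -
    have "c 0 * (H 1 0 + H 0 0) = 0" using c0 c1 by (simp add: algebra_simps)
    moreover have "c 0 \<noteq> 0" using c0 by auto
    ultimately show ?thesis unfolding h_def by simp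
  qed
  have gd: "gam_dot 2 H i x = H i 0 * x 0" for i x unfolding gam_dot_def by (simp add: l1)
  define a where "a = t / h"
  have ha: "h * a = t" unfolding a_def using h0 by simp
  define N where "N = PiM {..<(1::nat)} (\<lambda>_. borel :: real measure)"
  define pt where "pt b = restrict (\<lambda>_. if b then a else -a) {..<(1::nat)}" for b :: bool
  define B where "B = measure_pmf (bernoulli_pmf (1/2))"
  have ptm: "pt \<in> measurable B N" unfolding B_def N_def pt_def by (simp add: space_PiM)
  define \<rho> where "\<rho> = distr B N pt"
  have pt0: "pt b 0 = (if b then a else -a)" for b unfolding pt_def by simp
  define s where "s b = (if b then t else -t)" for b :: bool
  have g0: "gam_dot 2 H 0 (pt b) = s b" for b unfolding gd pt0 s_def h_def[symmetric] using ha by auto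
  have g1: "gam_dot 2 H 1 (pt b) = - s b" for b unfolding gd pt0 s_def h1 using ha by auto
  have sb: "-t \<le> s b \<and> s b \<le> t" for b unfolding s_def using tf by auto
  have c0m[measurable]: "(\<lambda>x. x 0) \<in> borel_measurable N" unfolding N_def
    by (rule measurable_component_singleton) auto
  have gm[measurable]: "(\<lambda>x. gam_dot 2 H i x) \<in> borel_measurable N" for i unfolding gd by measurable
  have psB: "prob_space B" unfolding B_def by (rule prob_space_measure_pmf)
  have ps\<rho>: "prob_space \<rho>" unfolding \<rho>_def by (rule prob_space.prob_space_distr[OF psB ptm])
  have sets\<rho>: "sets \<rho> = sets N" unfolding \<rho>_def by simp
  have finB: "finite (set_pmf (bernoulli_pmf (1/2)))" by (rule finite_subset[of _ UNIV]) auto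
  have Xeq: "{x \<in> space N. x \<in> Xset 2 H} = {x \<in> space N. 0 \<le> 1 + gam_dot 2 H 0 x \<and> 0 \<le> 1 + gam_dot 2 H 1 x}"
    unfolding Xset_def N_def by (auto simp: less_2_cases_iff)
  have Xm: "{x \<in> space N. x \<in> Xset 2 H} \<in> sets N" unfolding Xeq by measurable
  have anch: "anchored 2 H \<rho>"
    unfolding anchored_def
  proof (intro conjI allI impI)
    show "prob_space \<rho>" by (rule ps\<rho>)
    show "sets \<rho> = sets (PiM {..<2-1} (\<lambda>_. borel :: real measure))" unfolding sets\<rho> N_def by simp
    show "AE x in \<rho>. x \<in> Xset 2 H" unfolding \<rho>_def
    proof (subst AE_distr_iff[OF ptm Xm], rule AE_I2)
      fix b
      have "pt b \<in> space N" unfolding N_def pt_def by (simp add: space_PiM)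
      moreover have "0 \<le> 1 + gam_dot 2 H 0 (pt b)" "0 \<le> 1 + gam_dot 2 H 1 (pt b)"
        unfolding g0 g1 using sb[of b] tf by auto
      ultimately show "pt b \<in> Xset 2 H" unfolding Xset_def N_def by (auto simp: less_2_cases_iff)
    qed
    fix k :: nat assume "k < 2 - 1"
    then have k: "k = 0" by simp
    show "integrable \<rho> (\<lambda>x. x k)" unfolding k \<rho>_def
      by (subst integrable_distr_eq[OF ptm c0m]) (simp add: B_def integrable_measure_pmf_finite[OF finB])
    show "(\<integral>x. x k \<partial>\<rho>) = 0" unfolding k \<rho>_def
      by (subst integral_distr[OF ptm c0m]) (simp add: B_def pt0)
  qed
  define W where "W = Wrho 2 H \<rho>"
  define w where "w k x = 1 + gam_dot 2 H k x" for k x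
  have Wk: "W k = density \<rho> (\<lambda>x. ennreal (w k x))" for k unfolding W_def Wrho_def w_def ..
  have wm[measurable]: "(\<lambda>x. w k x) \<in> borel_measurable N" for k unfolding w_def by measurable
  have wm\<rho>: "(\<lambda>x. ennreal (w k x)) \<in> borel_measurable \<rho>" for k
    using wm[of k] by (simp add: \<rho>_def)
  have wpt: "w 0 (pt b) = 1 + s b" "w 1 (pt b) = 1 - s b" for b unfolding w_def g0 g1 by auto
  have emW: "emeasure (W k) A = (\<integral>\<^sup>+ b. ennreal (w k (pt b)) * indicator A (pt b) \<partial>B)"
    if A: "A \<in> sets N" for k A
  proof -
    have "emeasure (W k) A = (\<integral>\<^sup>+ x. ennreal (w k x) * indicator A x \<partial>\<rho>)"
      unfolding Wk using A wm\<rho>[of k] sets\<rho> by (simp add: emeasure_density)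
    also have "\<dots> = (\<integral>\<^sup>+ b. ennreal (w k (pt b)) * indicator A (pt b) \<partial>B)"
      unfolding \<rho>_def by (rule nn_integral_distr[OF ptm]) (use A in measurable)
    finally show ?thesis .
  qed
  have wineq: "w j (pt b) \<le> \<theta> * w i (pt b)" if "i < 2" "j < 2" for i j b
  proof -
    have ij: "i = 0 \<or> i = 1" "j = 0 \<or> j = 1" using that by auto
    have "w j (pt b) \<le> 1 + t" using ij wpt[of b] sb[of b] by auto
    also have "1 + t = \<theta> * (1 - t)" using tf by simp
    also have "\<theta> * (1 - t) \<le> \<theta> * w i (pt b)"
      using ij wpt[of b] sb[of b] thp by (intro mult_left_mono) auto
    finally show ?thesis .
  qed
  have wpos: "0 \<le> w i (pt b)" if "i < 2" for i b
  proof -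
    have "i = 0 \<or> i = 1" using that by auto
    then show ?thesis using wpt[of b] sb[of b] tf by auto
  qed
  have ldp: "is_LDP \<epsilon>0 {..<2} W"
    unfolding is_LDP_def
  proof (intro ballI)
    fix i j :: nat and A assume i: "i \<in> {..<2}" and j: "j \<in> {..<2}" and A: "A \<in> sets (W i)"
    then have AN: "A \<in> sets N" unfolding Wk by (simp add: sets\<rho>)
    have "emeasure (W j) A = (\<integral>\<^sup>+ b. ennreal (w j (pt b)) * indicator A (pt b) \<partial>B)" by (rule emW[OF AN])
    also have "\<dots> \<le> (\<integral>\<^sup>+ b. ennreal \<theta> * (ennreal (w i (pt b)) * indicator A (pt b)) \<partial>B)"
    proof (rule nn_integral_mono)
      fix b
      have "ennreal (w j (pt b)) \<le> ennreal (\<theta> * w i (pt b))"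
        by (rule ennreal_leI) (use wineq i j in auto)
      also have "\<dots> = ennreal \<theta> * ennreal (w i (pt b))"
        by (rule ennreal_mult) (use thp wpos i in auto)
      finally show "ennreal (w j (pt b)) * indicator A (pt b) \<le> ennreal \<theta> * (ennreal (w i (pt b)) * indicator A (pt b))"
        by (auto simp: indicator_def)
    qed
    also have "\<dots> = ennreal \<theta> * (\<integral>\<^sup>+ b. ennreal (w i (pt b)) * indicator A (pt b) \<partial>B)"
      by (rule nn_integral_cmult) (simp add: B_def)
    also have "\<dots> = ennreal \<theta> * emeasure (W i) A" using emW[OF AN] by simp
    finally show "emeasure (W j) A \<le> ennreal (exp \<epsilon>0) * emeasure (W i) A" unfolding \<theta>_def .
  qed
  have adm: "(2, \<rho>, 0, 1) \<in> admissible HH \<epsilon>0"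
    unfolding admissible_def using anch ldp unfolding H_def W_def by auto
  define r where "r x = max (1/\<theta>) (min \<theta> (w 1 x / w 0 x))" for x
  have rm: "r \<in> borel_measurable N" unfolding r_def[abs_def] by measurable
  have rpt: "r (pt b) = (if b then 1/\<theta> else \<theta>)" for b
  proof (cases b)
    case True
    then have "w 1 (pt b) / w 0 (pt b) = 1/\<theta>" using wpt[of b] tf by (simp add: s_def)
    then show ?thesis using True th thp unfolding r_def
      by (smt (verit) divide_le_eq_1_pos)
  next
    case False
    then have "w 1 (pt b) / w 0 (pt b) = \<theta>" using wpt[of b] tf by (simp add: s_def)
    then show ?thesis using False th thp unfolding r_def
      by (smt (verit) divide_le_eq_1_pos)
  qed
  have inv: "1/\<theta> \<le> \<theta>" using th by (smt (verit) divide_le_eq_1_pos thp)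
  have W1: "W 1 = density (W 0) (\<lambda>y. ennreal (r y))"
  proof -
    have rm\<rho>: "(\<lambda>y. ennreal (r y)) \<in> borel_measurable \<rho>" using rm by (simp add: \<rho>_def)
    have "density (W 0) (\<lambda>y. ennreal (r y)) = density \<rho> (\<lambda>x. ennreal (w 0 x) * ennreal (r x))"
      unfolding Wk by (rule density_density_eq[OF wm\<rho> rm\<rho>])
    also have "\<dots> = W 1"
    proof (rule measure_eqI)
      show "sets (density \<rho> (\<lambda>x. ennreal (w 0 x) * ennreal (r x))) = sets (W 1)" unfolding Wk by simp
      fix A assume "A \<in> sets (density \<rho> (\<lambda>x. ennreal (w 0 x) * ennreal (r x)))"
      then have AN: "A \<in> sets N" by (simp add: sets\<rho>)
      have "emeasure (density \<rho> (\<lambda>x. ennreal (w 0 x) * ennreal (r x))) A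
          = (\<integral>\<^sup>+ x. ennreal (w 0 x) * ennreal (r x) * indicator A x \<partial>\<rho>)"
        using AN sets\<rho> wm\<rho> rm\<rho> by (simp add: emeasure_density)
      also have "\<dots> = (\<integral>\<^sup>+ b. ennreal (w 0 (pt b)) * ennreal (r (pt b)) * indicator A (pt b) \<partial>B)"
        unfolding \<rho>_def by (rule nn_integral_distr[OF ptm]) (use AN rm in measurable)
      also have "\<dots> = (\<integral>\<^sup>+ b. ennreal (w 1 (pt b)) * indicator A (pt b) \<partial>B)"
      proof (rule nn_integral_cong)
        fix b
        have "w 0 (pt b) * r (pt b) = w 1 (pt b)"
        proof (cases b)
          case True
          then have e: "w 0 (pt b) = 1 + t" "w 1 (pt b) = 1 - t" "r (pt b) = 1/\<theta>"
            using wpt[of b] rpt[of b] by (auto simp: s_def)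
          have "(1 + t) * (1/\<theta>) = 1 - t" using tf(4) by simp
          then show ?thesis unfolding e .
        next
          case False
          then have e: "w 0 (pt b) = 1 - t" "w 1 (pt b) = 1 + t" "r (pt b) = \<theta>"
            using wpt[of b] rpt[of b] by (auto simp: s_def)
          have "(1 - t) * \<theta> = 1 + t" using tf(3) by (simp add: mult.commute)
          then show ?thesis unfolding e .
        qed
        moreover have "ennreal (w 0 (pt b)) * ennreal (r (pt b)) = ennreal (w 0 (pt b) * r (pt b))"
          by (rule ennreal_mult[symmetric]) (use wpos rpt thp in auto)
        ultimately show "ennreal (w 0 (pt b)) * ennreal (r (pt b)) * indicator A (pt b) = ennreal (w 1 (pt b)) * indicator A (pt b)"
          by simp
      qed
      also have "\<dots> = emeasure (W 1) A" by (rule emW[OF AN, symmetric])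
      finally show "emeasure (density \<rho> (\<lambda>x. ennreal (w 0 x) * ennreal (r x))) A = emeasure (W 1) A" .
    qed
    finally show ?thesis by simp
  qed
  have rmW: "r \<in> borel_measurable (W 0)" using rm unfolding Wk by (simp add: \<rho>_def)
  have rbW: "\<forall>y\<in>space (W 0). 1/\<theta> \<le> r y \<and> r y \<le> \<theta>" unfolding r_def using inv by auto
  have AE2: "AE y in W 0. r y = 1/\<theta> \<or> r y = \<theta>"
  proof -
    have P: "{x \<in> space N. r x = 1/\<theta> \<or> r x = \<theta>} \<in> sets N" using rm by measurable
    have "AE x in \<rho>. r x = 1/\<theta> \<or> r x = \<theta>" unfolding \<rho>_def
      by (subst AE_distr_iff[OF ptm P]) (auto simp: rpt intro: AE_I2)
    then show ?thesis unfolding Wk by (subst AE_density[OF wm\<rho>]) (auto elim: AE_mp intro: AE_I2)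
  qed
  show ?thesis
    using adm W1 rmW rbW AE2 unfolding W_def H_def \<theta>_def by blast
qed

theorem theorem4p8:
  fixes HH :: "nat \<Rightarrow> nat \<Rightarrow> nat \<Rightarrow> real" and \<epsilon>0 :: real and n :: nat
  assumes "\<And>d. 2 \<le> d \<Longrightarrow> valid_H d (HH d)"
    and "\<epsilon>0 \<ge> 0" and "n \<ge> 1"
  shows "(\<forall>f :: real \<Rightarrow> real. convex_on {0..} f \<and> f 1 = 0 \<longrightarrow>
            (SUP (d, \<rho>, i, j) \<in> admissible HH \<epsilon>0.
               ereal (fdiv f (Qone (Wrho d (HH d) \<rho>) i j n) (Qzero (Wrho d (HH d) \<rho>) i n)))
            = ereal (fdiv f (Qone (BRR \<epsilon>0) 0 1 n) (Qzero (BRR \<epsilon>0) 0 n)))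
       \<and> (\<forall>\<alpha> :: real. \<alpha> \<ge> 1 \<longrightarrow>
            (SUP (d, \<rho>, i, j) \<in> admissible HH \<epsilon>0.
               ereal (hockey \<alpha> (Qone (Wrho d (HH d) \<rho>) i j n) (Qzero (Wrho d (HH d) \<rho>) i n)))
            = ereal (hockey \<alpha> (Qone (BRR \<epsilon>0) 0 1 n) (Qzero (BRR \<epsilon>0) 0 n))
          \<and> (SUP (d, \<rho>, i, j) \<in> admissible HH \<epsilon>0.
               ereal (hockey \<alpha> (Qzero (Wrho d (HH d) \<rho>) i n) (Qone (Wrho d (HH d) \<rho>) i j n)))
            = ereal (hockey \<alpha> (Qzero (BRR \<epsilon>0) 0 n) (Qone (BRR \<epsilon>0) 0 1 n)))"
proof -
  have vH: "valid_H 2 (HH 2)" using assms(1) by simp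
  have e0: "\<epsilon>0 \<ge> 0" by (rule assms(2))
  have n: "n \<ge> 1" by (rule assms(3))
  define \<theta> where "\<theta> = exp \<epsilon>0"
  have th: "\<theta> \<ge> 1" unfolding \<theta>_def using e0 by simp
  define rB where "rB = (\<lambda>b::bool. if b then 1/\<theta> else \<theta>)"
  note BP = BRR_props[OF e0, folded \<theta>_def]
  obtain \<rho>w where admw: "(2, \<rho>w, 0, 1) \<in> admissible HH \<epsilon>0" and
    rwex: "\<exists>r. Wrho 2 (HH 2) \<rho>w 1 = density (Wrho 2 (HH 2) \<rho>w 0) (\<lambda>y. ennreal (r y)) \<and>
          r \<in> borel_measurable (Wrho 2 (HH 2) \<rho>w 0) \<and>
          (\<forall>y\<in>space (Wrho 2 (HH 2) \<rho>w 0). 1/\<theta> \<le> r y \<and> r y \<le> \<theta>) \<and>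
          (AE y in Wrho 2 (HH 2) \<rho>w 0. r y = 1/\<theta> \<or> r y = \<theta>)"
    using witness[of HH \<epsilon>0, OF vH e0] unfolding \<theta>_def by blast
  define Ww where "Ww = Wrho 2 (HH 2) \<rho>w"
  obtain rw where rw: "Ww 1 = density (Ww 0) (\<lambda>y. ennreal (rw y))" "rw \<in> borel_measurable (Ww 0)"
      "\<And>y. y \<in> space (Ww 0) \<Longrightarrow> 1/\<theta> \<le> rw y \<and> rw y \<le> \<theta>" "AE y in Ww 0. rw y = 1/\<theta> \<or> rw y = \<theta>"
    using rwex unfolding Ww_def by blast
  have psw: "prob_space (Ww 0)" "prob_space (Ww 1)"
    using adm_r[OF admw e0] unfolding Ww_def by auto
  have gen: "\<exists>r. prob_space (Wrho d (HH d) \<rho> i) \<and> prob_space (Wrho d (HH d) \<rho> j) \<and>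
      Wrho d (HH d) \<rho> j = density (Wrho d (HH d) \<rho> i) (\<lambda>y. ennreal (r y)) \<and>
      r \<in> borel_measurable (Wrho d (HH d) \<rho> i) \<and>
      (\<forall>y\<in>space (Wrho d (HH d) \<rho> i). 1/\<theta> \<le> r y \<and> r y \<le> \<theta>)"
    if "(d, \<rho>, i, j) \<in> admissible HH \<epsilon>0" for d \<rho> i j
    using adm_r[OF that e0] unfolding \<theta>_def by blast
  have part1: "(SUP (d, \<rho>, i, j) \<in> admissible HH \<epsilon>0.
               ereal (fdiv f (Qone (Wrho d (HH d) \<rho>) i j n) (Qzero (Wrho d (HH d) \<rho>) i n)))
            = ereal (fdiv f (Qone (BRR \<epsilon>0) 0 1 n) (Qzero (BRR \<epsilon>0) 0 n))"
    if cv: "convex_on {0..} f" for f :: "real \<Rightarrow> real"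
  proof -
    let ?v = "Bn \<theta> (\<lambda>t. f (t / real n)) n 0"
    have vB: "fdiv f (Qone (BRR \<epsilon>0) 0 1 n) (Qzero (BRR \<epsilon>0) 0 n) = ?v"
      using V1[where W="BRR \<epsilon>0" and i=0 and j=1 and r="\<lambda>b::bool. if b then 1/\<theta> else \<theta>", OF BP(1,2,3,4,5,6) n cv] BP(7) by blast
    have "(SUP (d, \<rho>, i, j) \<in> admissible HH \<epsilon>0.
               ereal (fdiv f (Qone (Wrho d (HH d) \<rho>) i j n) (Qzero (Wrho d (HH d) \<rho>) i n))) = ereal ?v"
    proof (rule sup_attain[OF _ admw])
      fix x assume x: "x \<in> admissible HH \<epsilon>0"
      obtain d \<rho> i j where xe: "x = (d, \<rho>, i, j)" by (cases x) auto
      obtain r where "prob_space (Wrho d (HH d) \<rho> i)" "prob_space (Wrho d (HH d) \<rho> j)"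
        "Wrho d (HH d) \<rho> j = density (Wrho d (HH d) \<rho> i) (\<lambda>y. ennreal (r y))"
        "r \<in> borel_measurable (Wrho d (HH d) \<rho> i)"
        "\<And>y. y \<in> space (Wrho d (HH d) \<rho> i) \<Longrightarrow> 1/\<theta> \<le> r y \<and> r y \<le> \<theta>"
        using gen[of d \<rho> i j] x xe by blast
      from V1[where W="Wrho d (HH d) \<rho>" and i=i and j=j and r=r and \<theta>=\<theta> and n=n, OF this th n cv]
      show "(case x of (d, \<rho>, i, j) \<Rightarrow> ereal (fdiv f (Qone (Wrho d (HH d) \<rho>) i j n) (Qzero (Wrho d (HH d) \<rho>) i n))) \<le> ereal ?v"
        unfolding xe by simp
    next
      show "(case (2::nat, \<rho>w, 0::nat, 1::nat) of (d, \<rho>, i, j) \<Rightarrow> ereal (fdiv f (Qone (Wrho d (HH d) \<rho>) i j n) (Qzero (Wrho d (HH d) \<rho>) i n))) = ereal ?v"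
        using V1[where W=Ww and i=0 and j=1 and r=rw and \<theta>=\<theta> and n=n, OF psw rw(1,2,3) th n cv] rw(4) unfolding Ww_def by simp
    qed
    then show ?thesis using vB by simp
  qed
  have part2: "(SUP (d, \<rho>, i, j) \<in> admissible HH \<epsilon>0.
               ereal (hockey \<alpha> (Qone (Wrho d (HH d) \<rho>) i j n) (Qzero (Wrho d (HH d) \<rho>) i n)))
            = ereal (hockey \<alpha> (Qone (BRR \<epsilon>0) 0 1 n) (Qzero (BRR \<epsilon>0) 0 n))" for \<alpha>
  proof -
    let ?v = "Bn \<theta> (\<lambda>t. max 0 (t / real n - \<alpha>)) n 0"
    have vB: "hockey \<alpha> (Qone (BRR \<epsilon>0) 0 1 n) (Qzero (BRR \<epsilon>0) 0 n) = ?v"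
      using V2[where W="BRR \<epsilon>0" and i=0 and j=1 and r="\<lambda>b::bool. if b then 1/\<theta> else \<theta>", OF BP(1,2,3,4,5,6) n] BP(7) by blast
    have "(SUP (d, \<rho>, i, j) \<in> admissible HH \<epsilon>0.
               ereal (hockey \<alpha> (Qone (Wrho d (HH d) \<rho>) i j n) (Qzero (Wrho d (HH d) \<rho>) i n))) = ereal ?v"
    proof (rule sup_attain[OF _ admw])
      fix x assume x: "x \<in> admissible HH \<epsilon>0"
      obtain d \<rho> i j where xe: "x = (d, \<rho>, i, j)" by (cases x) auto
      obtain r where "prob_space (Wrho d (HH d) \<rho> i)" "prob_space (Wrho d (HH d) \<rho> j)"
        "Wrho d (HH d) \<rho> j = density (Wrho d (HH d) \<rho> i) (\<lambda>y. ennreal (r y))"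
        "r \<in> borel_measurable (Wrho d (HH d) \<rho> i)"
        "\<And>y. y \<in> space (Wrho d (HH d) \<rho> i) \<Longrightarrow> 1/\<theta> \<le> r y \<and> r y \<le> \<theta>"
        using gen[of d \<rho> i j] x xe by blast
      from V2[where W="Wrho d (HH d) \<rho>" and i=i and j=j and r=r and \<theta>=\<theta> and n=n, OF this th n]
      show "(case x of (d, \<rho>, i, j) \<Rightarrow> ereal (hockey \<alpha> (Qone (Wrho d (HH d) \<rho>) i j n) (Qzero (Wrho d (HH d) \<rho>) i n))) \<le> ereal ?v"
        unfolding xe by simp
    next
      show "(case (2::nat, \<rho>w, 0::nat, 1::nat) of (d, \<rho>, i, j) \<Rightarrow> ereal (hockey \<alpha> (Qone (Wrho d (HH d) \<rho>) i j n) (Qzero (Wrho d (HH d) \<rho>) i n))) = ereal ?v"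
        using V2[where W=Ww and i=0 and j=1 and r=rw and \<theta>=\<theta> and n=n, OF psw rw(1,2,3) th n] rw(4) unfolding Ww_def by simp
    qed
    then show ?thesis using vB by simp
  qed
  have part3: "(SUP (d, \<rho>, i, j) \<in> admissible HH \<epsilon>0.
               ereal (hockey \<alpha> (Qzero (Wrho d (HH d) \<rho>) i n) (Qone (Wrho d (HH d) \<rho>) i j n)))
            = ereal (hockey \<alpha> (Qzero (BRR \<epsilon>0) 0 n) (Qone (BRR \<epsilon>0) 0 1 n))" for \<alpha>
  proof -
    let ?v = "Bn \<theta> (\<lambda>t. max 0 (1 - \<alpha> * (t / real n))) n 0"
    have vB: "hockey \<alpha> (Qzero (BRR \<epsilon>0) 0 n) (Qone (BRR \<epsilon>0) 0 1 n) = ?v"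
      using V3[where W="BRR \<epsilon>0" and i=0 and j=1 and r="\<lambda>b::bool. if b then 1/\<theta> else \<theta>", OF BP(1,2,3,4,5,6) n] BP(7) by blast
    have "(SUP (d, \<rho>, i, j) \<in> admissible HH \<epsilon>0.
               ereal (hockey \<alpha> (Qzero (Wrho d (HH d) \<rho>) i n) (Qone (Wrho d (HH d) \<rho>) i j n))) = ereal ?v"
    proof (rule sup_attain[OF _ admw])
      fix x assume x: "x \<in> admissible HH \<epsilon>0"
      obtain d \<rho> i j where xe: "x = (d, \<rho>, i, j)" by (cases x) auto
      obtain r where "prob_space (Wrho d (HH d) \<rho> i)" "prob_space (Wrho d (HH d) \<rho> j)"
        "Wrho d (HH d) \<rho> j = density (Wrho d (HH d) \<rho> i) (\<lambda>y. ennreal (r y))"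
        "r \<in> borel_measurable (Wrho d (HH d) \<rho> i)"
        "\<And>y. y \<in> space (Wrho d (HH d) \<rho> i) \<Longrightarrow> 1/\<theta> \<le> r y \<and> r y \<le> \<theta>"
        using gen[of d \<rho> i j] x xe by blast
      from V3[where W="Wrho d (HH d) \<rho>" and i=i and j=j and r=r and \<theta>=\<theta> and n=n, OF this th n]
      show "(case x of (d, \<rho>, i, j) \<Rightarrow> ereal (hockey \<alpha> (Qzero (Wrho d (HH d) \<rho>) i n) (Qone (Wrho d (HH d) \<rho>) i j n))) \<le> ereal ?v"
        unfolding xe by simp
    next
      show "(case (2::nat, \<rho>w, 0::nat, 1::nat) of (d, \<rho>, i, j) \<Rightarrow> ereal (hockey \<alpha> (Qzero (Wrho d (HH d) \<rho>) i n) (Qone (Wrho d (HH d) \<rho>) i j n))) = ereal ?v"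
        using V3[where W=Ww and i=0 and j=1 and r=rw and \<theta>=\<theta> and n=n, OF psw rw(1,2,3) th n] rw(4) unfolding Ww_def by simp
    qed
    then show ?thesis using vB by simp
  qed
  show ?thesis using part1 part2 part3 by blast
qed

end
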